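(* Let $q_0\in M$ and $p_0\in\mathbb{R}^n$. The Euclidean gradient of $\hat{J}_1$ at $p_0$ is $\nabla\hat{J}_1(p_0)=K_{q_0}p_0+\alpha(1)$, where $(z(\cdot),\alpha(\cdot))$ is the solution of \begin{equation*} \begin{split} \dot{z}(t)&=\nabla_{q}\big(p(1-t)^TK_{q(1-t)}z(t)\big)-\frac{1}{2}\partial_q\Big(\nabla_q\big(p(1-t)^TK_{q(1-t)}p(1-t)\big)\Big).\alpha(t), \\ \dot{\alpha}(t)&=K_{q(1-t)}z(t)-\partial_q\big(K_{q(1-t)}p(1-t)\big).\alpha(t) \end{split} \end{equation*} with $(z(0),\alpha(0))=(\nabla g(q(1)),0)$, and $(q(t),p(t))$ satisfies the geodesic equations $\dot{q}(t)=K_{q(t)}p(t)$ and $\dot{p}(t) = -\frac{1}{2}\nabla_q(p(t)^TK_{q(t)}p(t))$ for almost every $t\in[0,1]$, with $q(0)=q_0$ and $p(0)=p_0$.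
   Context: Finite-dimensional unconstrained setting: the shape space $M$ is an open subset of $X=\mathbb{R}^n$, on which diffeomorphisms of $\mathbb{R}^d$ act with infinitesimal action $\xi_q$; $V$ is a reproducing kernel Hilbert space of vector fields on $\mathbb{R}^d$ with Riesz isometry $K_V:V^*\to V$, and $K_q=\xi_qK_V\xi_q^*$ is identified with an $n\times n$ symmetric positive semi-definite real matrix (the duality bracket being identified with the Euclidean product $p^Tw$). The function $g:M\to\mathbb{R}$ is of class $\mathcal{C}^1$ and $q\mapsto K_q$ is smooth enough (the infinitesimal action $\xi$ being of class $\mathcal{C}^2$). The reduced Hamiltonian is $h(q,p)=\frac{1}{2}p^TK_qp$, and the functional to be minimized over initial momenta is $\hat{J}_1(p_0)=\frac{1}{2}p_0^TK_{q_0}p_0+g(q(1))$, where $(q(\cdot),p(\cdot))$ is the solution of the Hamiltonian system $\dot q=\partial_ph(q,p)$, $\dot p=-\partial_qh(q,p)$ with $(q(0),p(0))=(q_0,p_0)$. The gradient is taken with respect to the canonical Euclidean inner product on $\mathbb{R}^n$. *)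

theory Defs
  imports "HOL-Analysis.Analysis"
begin

definition grad :: "('a::euclidean_space \<Rightarrow> real) \<Rightarrow> 'a \<Rightarrow> 'a" where
  "grad f x = (\<Sum>b\<in>Basis. frechet_derivative f (at x) b *\<^sub>R b)"

definition C1_on :: "'a::real_normed_vector set \<Rightarrow> ('a \<Rightarrow> 'b::real_normed_vector) \<Rightarrow> bool" where
  "C1_on S f \<longleftrightarrow> (\<exists>f'. (\<forall>x\<in>S. (f has_derivative blinfun_apply (f' x)) (at x)) \<and> continuous_on S f')"

definition C2_on :: "'a::real_normed_vector set \<Rightarrow> ('a \<Rightarrow> 'b::real_normed_vector) \<Rightarrow> bool" where
  "C2_on S f \<longleftrightarrow> (\<exists>f'. (\<forall>x\<in>S. (f has_derivative blinfun_apply (f' x)) (at x)) \<and> C1_on S f')"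

definition ham_sol ::
  "(real^('n::finite)) set \<Rightarrow> (real^'n \<Rightarrow> real^'n^'n) \<Rightarrow> real^'n \<Rightarrow> real^'n
     \<Rightarrow> (real \<Rightarrow> real^'n) \<Rightarrow> (real \<Rightarrow> real^'n) \<Rightarrow> bool" where
  "ham_sol M K q0 p0 q p \<longleftrightarrow> q 0 = q0 \<and> p 0 = p0 \<and>
     (\<forall>t\<in>{0..1}. q t \<in> M \<and>
        (q has_vector_derivative (K (q t) *v p t)) (at t within {0..1}) \<and>
        (p has_vector_derivative (- (1/2) *\<^sub>R grad (\<lambda>x. p t \<bullet> (K x *v p t)) (q t))) (at t within {0..1}))"

definition J1 ::
  "(real^('n::finite)) set \<Rightarrow> (real^'n \<Rightarrow> real^'n^'n) \<Rightarrow> (real^'n \<Rightarrow> real) \<Rightarrow> real^'n \<Rightarrow> real^'n \<Rightarrow> real" where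
  "J1 M K g q0 p0 = (1/2) * (p0 \<bullet> (K q0 *v p0)) +
     g (THE y. \<exists>q p. ham_sol M K q0 p0 q p \<and> y = q 1)"

end

theory Submission
  imports Defs "HOL-Analysis.Analysis"
begin


lemma real_deriv_nonpos_le:
  fixes f f' :: "real \<Rightarrow> real"
  assumes d: "\<And>t. t \<in> {a..b} \<Longrightarrow> (f has_real_derivative f' t) (at t within {a..b})"
    and n: "\<And>t. t \<in> {a..b} \<Longrightarrow> f' t \<le> 0" and ab: "a \<le> b"
  shows "f b \<le> f a"
proof (cases "a = b")
  case True then show ?thesis by simp
next
  case False
  then have lt: "a < b" using ab by simp
  have cont: "continuous_on {a..b} f"
    unfolding continuous_on_eq_continuous_within using d DERIV_continuous by blast
  have dif: "f differentiable (at x)" if "a < x" "x < b" for x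
    using d[of x] that at_within_Icc_at[of a x b] real_differentiable_def by fastforce
  obtain l z where z: "a < z" "z < b" "DERIV f z :> l" "f b - f a = (b - a) * l"
    using MVT[OF lt cont dif] by blast
  have "DERIV f z :> f' z" using d[of z] z at_within_Icc_at[of a z b] by auto
  then have "l = f' z" using z(3) DERIV_unique by blast
  then have "l \<le> 0" using n[of z] z by auto
  have "(b - a) * l \<le> 0" by (rule mult_nonneg_nonpos) (use lt \<open>l \<le> 0\<close> in auto)
  then show ?thesis using z(4) by linarith
qed

lemma real_deriv_abs_le:
  fixes f f' :: "real \<Rightarrow> real"
  assumes d: "\<And>t. t \<in> {a..b} \<Longrightarrow> (f has_real_derivative f' t) (at t within {a..b})"
    and n: "\<And>t. t \<in> {a..b} \<Longrightarrow> \<bar>f' t\<bar> \<le> B" and ab: "a \<le> b"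
  shows "\<bar>f b - f a\<bar> \<le> B * (b - a)"
proof -
  define g1 where "g1 = (\<lambda>t. f t - B * t)"
  define g2 where "g2 = (\<lambda>t. - f t - B * t)"
  have "g1 b \<le> g1 a"
  proof (rule real_deriv_nonpos_le[where f=g1 and a=a and b=b and f'="\<lambda>t. f' t - B"])
    fix t assume t: "t \<in> {a..b}"
    show "(g1 has_real_derivative f' t - B) (at t within {a..b})"
      unfolding g1_def using d[OF t] by (auto intro!: derivative_eq_intros)
    show "f' t - B \<le> 0" using n[OF t] by auto
  qed (use ab in auto)
  moreover have "g2 b \<le> g2 a"
  proof (rule real_deriv_nonpos_le[where f=g2 and a=a and b=b and f'="\<lambda>t. - f' t - B"])
    fix t assume t: "t \<in> {a..b}"
    show "(g2 has_real_derivative - f' t - B) (at t within {a..b})"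
      unfolding g2_def using d[OF t] by (auto intro!: derivative_eq_intros)
    show "- f' t - B \<le> 0" using n[OF t] by auto
  qed (use ab in auto)
  ultimately show ?thesis unfolding g1_def g2_def by (auto simp: algebra_simps abs_le_iff)
qed


definition solU :: "'a::real_normed_vector set \<Rightarrow> ('a \<Rightarrow> 'a) \<Rightarrow> 'a \<Rightarrow> (real \<Rightarrow> 'a) \<Rightarrow> bool" where
  "solU U F x0 x \<longleftrightarrow> x 0 = x0 \<and> (\<forall>t\<in>{0..1}. x t \<in> U \<and> (x has_vector_derivative F (x t)) (at t within {0..1}))"

lemma solU_cont: "solU U F x0 x \<Longrightarrow> continuous_on {0..1} x"
  unfolding solU_def by (rule continuous_on_vector_derivative) auto

lemma gronwall:
  fixes x y :: "real \<Rightarrow> 'a::real_inner"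
  assumes L: "L \<ge> 0" and lip: "\<And>a b. a\<in>S \<Longrightarrow> b\<in>S \<Longrightarrow> norm (F a - F b) \<le> L * norm (a - b)"
    and xd: "\<And>t. t \<in> {0..1} \<Longrightarrow> (x has_vector_derivative F (x t)) (at t within {0..1})"
    and xS: "\<And>t. t \<in> {0..1} \<Longrightarrow> x t \<in> S"
    and yd: "\<And>t. t \<in> {0..1} \<Longrightarrow> (y has_vector_derivative F (y t)) (at t within {0..1})"
    and yS: "\<And>t. t \<in> {0..1} \<Longrightarrow> y t \<in> S"
    and t: "t \<in> {0..1}"
  shows "norm (x t - y t) \<le> norm (x 0 - y 0) * exp (L * t)"
proof -
  define u where "u = (\<lambda>s. (x s - y s) \<bullet> (x s - y s))"
  define w where "w = (\<lambda>s. exp (- (2 * L) * s) * u s)"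
  define w' where "w' = (\<lambda>s. exp (- (2 * L) * s) * (- (2 * L)) * u s
      + exp (- (2 * L) * s) * (2 * ((x s - y s) \<bullet> (F (x s) - F (y s)))))"
  have ud: "(u has_real_derivative 2 * ((x s - y s) \<bullet> (F (x s) - F (y s)))) (at s within {0..1})"
    if s: "s \<in> {0..1}" for s
  proof -
    have "(u has_derivative (\<lambda>h. (x s - y s) \<bullet> (h *\<^sub>R (F (x s) - F (y s))) + (h *\<^sub>R (F (x s) - F (y s))) \<bullet> (x s - y s))) (at s within {0..1})"
      unfolding u_def
      using xd[OF s] yd[OF s] unfolding has_vector_derivative_def
      by (auto intro!: derivative_eq_intros simp: algebra_simps)
    then show ?thesis unfolding has_field_derivative_def
      by (rule has_derivative_eq_rhs) (auto simp: inner_commute algebra_simps fun_eq_iff)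
  qed
  have wd: "(w has_real_derivative w' s) (at s within {0..t})" if s: "s \<in> {0..t}" for s
  proof -
    have s1: "s \<in> {0..1}" using s t by auto
    have "(w has_real_derivative w' s) (at s within {0..1})"
      unfolding w_def w'_def
      by (auto intro!: derivative_eq_intros ud[OF s1])
    then show ?thesis by (rule DERIV_subset) (use t in auto)
  qed
  have w'le: "w' s \<le> 0" if s: "s \<in> {0..t}" for s
  proof -
    have s1: "s \<in> {0..1}" using s t by auto
    have "(x s - y s) \<bullet> (F (x s) - F (y s)) \<le> norm (x s - y s) * norm (F (x s) - F (y s))"
      by (rule norm_cauchy_schwarz)
    also have "\<dots> \<le> norm (x s - y s) * (L * norm (x s - y s))"
      by (rule mult_left_mono) (use lip xS yS s1 in auto)
    also have "\<dots> = L * u s" unfolding u_def by (simp add: power2_norm_eq_inner[symmetric] power2_eq_square)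
    finally have "(x s - y s) \<bullet> (F (x s) - F (y s)) \<le> L * u s" .
    then have "- (2 * L) * u s + 2 * ((x s - y s) \<bullet> (F (x s) - F (y s))) \<le> 0" by linarith
    then have "exp (- (2 * L) * s) * (- (2 * L) * u s + 2 * ((x s - y s) \<bullet> (F (x s) - F (y s)))) \<le> 0"
      by (simp add: mult_nonneg_nonpos)
    then show ?thesis unfolding w'_def by (simp add: algebra_simps)
  qed
  have "w t \<le> w 0"
    by (rule real_deriv_nonpos_le[where f=w and a=0 and b=t and f'=w']) (use wd w'le t in auto)
  then have "exp (- (2 * L) * t) * u t \<le> u 0" unfolding w_def by simp
  then have "u t \<le> exp (2 * L * t) * u 0"
    by (simp add: exp_minus field_simps)
  also have "\<dots> = (norm (x 0 - y 0) * exp (L * t))^2"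
    unfolding u_def by (simp add: power2_norm_eq_inner[symmetric] power_mult_distrib exp_double[symmetric] mult.commute mult.left_commute)
  finally have "(norm (x t - y t))^2 \<le> (norm (x 0 - y 0) * exp (L * t))^2"
    unfolding u_def by (simp add: power2_norm_eq_inner[symmetric])
  then show ?thesis by (rule power2_le_imp_le) simp
qed


locale c1f =
  fixes U :: "'a::euclidean_space set" and F :: "'a \<Rightarrow> 'a" and DF :: "'a \<Rightarrow> 'a \<Rightarrow> 'a"
  assumes U_open: "open U"
    and F_der: "\<And>x. x \<in> U \<Longrightarrow> (F has_derivative DF x) (at x)"
    and DF_cont: "continuous_on (U \<times> UNIV) (\<lambda>z. DF (fst z) (snd z))"
begin

lemma DF_linear: "x \<in> U \<Longrightarrow> linear (DF x)"
  using F_der has_derivative_linear by blast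

lemma F_cont: "continuous_on U F"
  using F_der has_derivative_continuous continuous_at_imp_continuous_on by blast

lemma DF_bound:
  assumes "compact S" "S \<subseteq> U"
  obtains B where "B \<ge> 0" "\<And>x h. x \<in> S \<Longrightarrow> norm (DF x h) \<le> B * norm h"
proof -
  have "compact ((\<lambda>z. DF (fst z) (snd z)) ` (S \<times> cball 0 1))"
    apply (rule compact_continuous_image)
     apply (rule continuous_on_subset[OF DF_cont]) using assms apply auto[1]
    using assms compact_Times compact_cball by blast
  then obtain B0 where B0: "\<And>z. z \<in> S \<times> cball 0 1 \<Longrightarrow> norm (DF (fst z) (snd z)) \<le> B0"
    using compact_imp_bounded bounded_iff by (metis (no_types, lifting) image_eqI)
  define B where "B = max B0 0"
  have "norm (DF x h) \<le> B * norm h" if x: "x \<in> S" for x h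
  proof (cases "h = 0")
    case True
    then show ?thesis using DF_linear[of x] x assms linear_0 by fastforce
  next
    case False
    define h' where "h' = h /\<^sub>R norm h"
    have "h' \<in> cball 0 1" unfolding h'_def using False by simp
    then have "norm (DF x h') \<le> B" using B0[of "(x, h')"] x unfolding B_def by auto
    moreover have "DF x h = norm h *\<^sub>R DF x h'"
    proof -
      have "DF x h = DF x (norm h *\<^sub>R h')" using False by (simp add: h'_def)
      also have "\<dots> = norm h *\<^sub>R DF x h'" by (rule linear_cmul[OF DF_linear]) (use x assms in auto)
      finally show ?thesis .
    qed
    ultimately show ?thesis
      by (metis mult.commute mult_left_mono norm_ge_zero norm_scaleR abs_norm_cancel)
  qed
  moreover have "B \<ge> 0" unfolding B_def by simp
  ultimately show ?thesis using that by blast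
qed

lemma lip_compact:
  assumes S: "compact S" "S \<subseteq> U"
  obtains L where "L \<ge> 0" "\<And>a b. a \<in> S \<Longrightarrow> b \<in> S \<Longrightarrow> norm (F a - F b) \<le> L * norm (a - b)"
proof -
  obtain e where e: "e > 0" "(\<Union>x\<in>S. cball x e) \<subseteq> U"
    by (rule compact_subset_open_imp_cball_epsilon_subset[OF S(1) U_open S(2)])
  define T where "T = {x + y |x y. x \<in> S \<and> y \<in> cball 0 e}"
  have cT: "compact T" unfolding T_def by (rule compact_sums) (use S in auto)
  have cbT: "cball x e \<subseteq> T" if "x \<in> S" for x
  proof
    fix z assume "z \<in> cball x e"
    then have "z - x \<in> cball 0 e" by (simp add: dist_norm norm_minus_commute)
    then show "z \<in> T" unfolding T_def using that by force
  qed
  have TU: "T \<subseteq> U"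
  proof
    fix z assume "z \<in> T"
    then obtain x y where "z = x + y" "x \<in> S" "y \<in> cball 0 e" unfolding T_def by auto
    then have "z \<in> cball x e" by (simp add: dist_norm)
    then show "z \<in> U" using e \<open>x \<in> S\<close> by blast
  qed
  obtain B where B: "B \<ge> 0" "\<And>x h. x \<in> T \<Longrightarrow> norm (DF x h) \<le> B * norm h"
    using DF_bound[OF cT TU] by blast
  have "compact (F ` S)" by (rule compact_continuous_image[OF continuous_on_subset[OF F_cont S(2)] S(1)])
  then obtain M0 where M0: "\<And>x. x \<in> S \<Longrightarrow> norm (F x) \<le> M0"
    using compact_imp_bounded bounded_iff by (metis image_eqI)
  define M where "M = max M0 0"
  have M: "M \<ge> 0" "\<And>x. x \<in> S \<Longrightarrow> norm (F x) \<le> M" using M0 unfolding M_def by force+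
  define L where "L = B + 2 * M / e"
  have "norm (F a - F b) \<le> L * norm (a - b)" if ab: "a \<in> S" "b \<in> S" for a b
  proof (cases "norm (a - b) \<le> e")
    case True
    have "norm (F b - F a) \<le> B * norm (b - a)"
    proof (rule differentiable_bound[where S="cball a e" and f'=DF])
      show "convex (cball a e)" by simp
      fix z assume z: "z \<in> cball a e"
      then have zT: "z \<in> T" using cbT ab by blast
      show "(F has_derivative DF z) (at z within cball a e)"
        using F_der TU zT has_derivative_at_withinI by blast
      show "onorm (DF z) \<le> B" by (rule onorm_le) (use B zT in auto)
    next
      show "b \<in> cball a e" using True by (simp add: dist_norm)
      show "a \<in> cball a e" using e by simp
    qed
    moreover have "B * norm (a - b) \<le> L * norm (a - b)"
      unfolding L_def using M e by (intro mult_right_mono) auto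
    ultimately show ?thesis by (simp add: norm_minus_commute)
  next
    case False
    have "norm (F a - F b) \<le> 2 * M" using M(2)[OF ab(1)] M(2)[OF ab(2)] norm_triangle_ineq4[of "F a" "F b"] by linarith
    also have "\<dots> \<le> 2 * M / e * norm (a - b)"
      using False e M by (simp add: field_simps mult_left_mono)
    also have "\<dots> \<le> L * norm (a - b)" unfolding L_def using B by (intro mult_right_mono) auto
    finally show ?thesis .
  qed
  moreover have "L \<ge> 0" unfolding L_def using B M e by auto
  ultimately show ?thesis using that by blast
qed

lemma sol_unique:
  assumes x: "solU U F x0 x" and y: "solU U F x0 y" and t: "t \<in> {0..1}"
  shows "x t = y t"
proof -
  define S where "S = x ` {0..1} \<union> y ` {0..1}"
  have cS: "compact S" unfolding S_def
    using compact_continuous_image[OF solU_cont[OF x]] compact_continuous_image[OF solU_cont[OF y]]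
    by auto
  have SU: "S \<subseteq> U" using x y unfolding S_def solU_def by auto
  obtain L where L: "L \<ge> 0" "\<And>a b. a \<in> S \<Longrightarrow> b \<in> S \<Longrightarrow> norm (F a - F b) \<le> L * norm (a - b)"
    using lip_compact[OF cS SU] by blast
  have "norm (x t - y t) \<le> norm (x 0 - y 0) * exp (L * t)"
  proof (rule gronwall[OF L])
    show "\<And>t. t \<in> {0..1} \<Longrightarrow> x t \<in> S" "\<And>t. t \<in> {0..1} \<Longrightarrow> y t \<in> S" unfolding S_def by auto
  qed (use x y t in \<open>auto simp: solU_def\<close>)
  then show ?thesis using x y unfolding solU_def by simp
qed

end


lemma exp_partial_le:
  fixes x :: real assumes "x \<ge> 0"
  shows "(\<Sum>j<k. x^j / fact j) \<le> exp x"
proof -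
  have "(\<lambda>n. x^n /\<^sub>R fact n) sums exp x" by (rule exp_converges)
  then have s: "summable (\<lambda>n. x^n / fact n)" "suminf (\<lambda>n. x^n / fact n) = exp x"
    by (auto simp: sums_iff divide_inverse_commute scaleR_conv_of_real)
  have "(\<Sum>j<k. x^j / fact j) \<le> suminf (\<lambda>n. x^n / fact n)"
    by (rule sum_le_suminf[OF s(1)]) (use assms in auto)
  then show ?thesis using s by simp
qed

lemma integral_power_0:
  fixes t :: real assumes "t \<ge> 0"
  shows "integral {0..t} (\<lambda>s. s^k) = t^Suc k / Suc k"
proof -
  have "((\<lambda>s. s^k) has_integral ((\<lambda>s. s^Suc k / Suc k) t - (\<lambda>s. s^Suc k / Suc k) 0)) {0..t}"
  proof (rule fundamental_theorem_of_calculus[OF assms])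
    fix x :: real
    have "((\<lambda>s. s^Suc k / Suc k) has_real_derivative (real (Suc k) * x ^ (Suc k - Suc 0)) / Suc k) (at x)"
      by (intro DERIV_cdivide DERIV_pow)
    then have "((\<lambda>s. s^Suc k / Suc k) has_real_derivative x^k) (at x within {0..t})"
      by (simp add: has_field_derivative_at_within del: of_nat_Suc)
    then show "((\<lambda>s. s^Suc k / Suc k) has_vector_derivative x^k) (at x within {0..t})"
      by (simp add: has_real_derivative_iff_has_vector_derivative)
  qed
  then show ?thesis by (simp add: integral_unique)
qed

lemma thicken:
  fixes S U :: "'a::euclidean_space set"
  assumes "compact S" "open U" "S \<subseteq> U"
  obtains e W where "e > 0" "compact W" "W \<subseteq> U" "\<And>x. x \<in> S \<Longrightarrow> cball x e \<subseteq> W"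
proof -
  obtain e where e: "e > 0" "(\<Union>x\<in>S. cball x e) \<subseteq> U"
    by (rule compact_subset_open_imp_cball_epsilon_subset[OF assms])
  define T where "T = {x + y |x y. x \<in> S \<and> y \<in> cball 0 e}"
  have cT: "compact T" unfolding T_def by (rule compact_sums) (use assms in auto)
  have cbT: "cball x e \<subseteq> T" if "x \<in> S" for x
  proof
    fix z assume "z \<in> cball x e"
    then have "z - x \<in> cball 0 e" by (simp add: dist_norm norm_minus_commute)
    then show "z \<in> T" unfolding T_def using that by force
  qed
  have TU: "T \<subseteq> U"
  proof
    fix z assume "z \<in> T"
    then obtain x y where "z = x + y" "x \<in> S" "y \<in> cball 0 e" unfolding T_def by auto
    then have "z \<in> cball x e" by (simp add: dist_norm)
    then show "z \<in> U" using e \<open>x \<in> S\<close> by blast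
  qed
  show ?thesis using that e(1) cT TU cbT by blast
qed

context c1f begin

definition Tm :: "'a \<Rightarrow> (real \<Rightarrow> 'a) \<Rightarrow> real \<Rightarrow> 'a" where
  "Tm y0 f t = y0 + integral {0..t} (\<lambda>s. F (f s))"

lemma Tm_props:
  assumes W: "W \<subseteq> U" and fc: "continuous_on {0..1} f" and fW: "\<And>s. s \<in> {0..1} \<Longrightarrow> f s \<in> W"
    and M: "\<And>x. x \<in> W \<Longrightarrow> norm (F x) \<le> M"
  shows "continuous_on {0..1} (\<lambda>s. F (f s))"
    and "\<And>t. t \<in> {0..1} \<Longrightarrow> (Tm y0 f has_vector_derivative F (f t)) (at t within {0..1})"
    and "continuous_on {0..1} (Tm y0 f)"
    and "\<And>s t. s \<in> {0..1} \<Longrightarrow> t \<in> {0..1} \<Longrightarrow> norm (Tm y0 f t - Tm y0 f s) \<le> M * \<bar>t - s\<bar>"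
    and "Tm y0 f 0 = y0"
proof -
  show c: "continuous_on {0..1} (\<lambda>s. F (f s))"
    by (rule continuous_on_compose2[OF F_cont fc]) (use fW W in auto)
  show d: "(Tm y0 f has_vector_derivative F (f t)) (at t within {0..1})" if "t \<in> {0..1}" for t
    unfolding Tm_def
    using integral_has_vector_derivative[OF c that]
    by (auto intro!: derivative_eq_intros)
  show "continuous_on {0..1} (Tm y0 f)"
    by (rule continuous_on_vector_derivative) (use d in auto)
  show "norm (Tm y0 f t - Tm y0 f s) \<le> M * \<bar>t - s\<bar>" if st: "s \<in> {0..1}" "t \<in> {0..1}" for s t
  proof -
    have "norm (Tm y0 f t - Tm y0 f s) \<le> M * norm (t - s)"
    proof (rule differentiable_bound[where S="{0..1}" and f'="\<lambda>(u::real) (h::real). h *\<^sub>R F (f u)"])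
      fix u :: real assume u: "u \<in> {0..1}"
      show "(Tm y0 f has_derivative (\<lambda>h. h *\<^sub>R F (f u))) (at u within {0..1})"
        using d[OF u] unfolding has_vector_derivative_def .
      show "onorm (\<lambda>h. h *\<^sub>R F (f u)) \<le> M"
      proof (rule onorm_le)
        fix x :: real
        have "norm (F (f u)) \<le> M" using M fW u by auto
        then show "norm (x *\<^sub>R F (f u)) \<le> M * norm x"
          by (simp add: mult.commute[of M] mult_left_mono)
      qed
    qed (use st in auto)
    then show ?thesis by simp
  qed
  show "Tm y0 f 0 = y0" unfolding Tm_def by simp
qed

lemma Tm_diff:
  assumes W: "W \<subseteq> U" and fc: "continuous_on {0..1} f" and fW: "\<And>s. s \<in> {0..1} \<Longrightarrow> f s \<in> W"
    and gc: "continuous_on {0..1} g" and gW: "\<And>s. s \<in> {0..1} \<Longrightarrow> g s \<in> W"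
    and L: "\<And>a b. a \<in> W \<Longrightarrow> b \<in> W \<Longrightarrow> norm (F a - F b) \<le> L * norm (a - b)"
    and L0: "L \<ge> 0" and b: "\<And>s. s \<in> {0..1} \<Longrightarrow> norm (f s - g s) \<le> h s"
    and hi: "h integrable_on {0..t}" and t: "t \<in> {0..1}"
  shows "norm (Tm y0 f t - Tm y0 g t) \<le> L * integral {0..t} h"
proof -
  have sub: "{0..t} \<subseteq> {0..1}" using t by auto
  have cf: "continuous_on {0..1} (\<lambda>s. F (f s))"
    by (rule continuous_on_compose2[OF F_cont fc]) (use fW W in auto)
  have cg: "continuous_on {0..1} (\<lambda>s. F (g s))"
    by (rule continuous_on_compose2[OF F_cont gc]) (use gW W in auto)
  have if1: "(\<lambda>s. F (f s)) integrable_on {0..t}"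
    by (rule integrable_continuous_interval[OF continuous_on_subset[OF cf sub]])
  have ig1: "(\<lambda>s. F (g s)) integrable_on {0..t}"
    by (rule integrable_continuous_interval[OF continuous_on_subset[OF cg sub]])
  have "Tm y0 f t - Tm y0 g t = integral {0..t} (\<lambda>s. F (f s) - F (g s))"
    unfolding Tm_def using integral_diff[OF if1 ig1] by simp
  also have "norm \<dots> \<le> integral {0..t} (\<lambda>s. L * h s)"
  proof (rule integral_norm_bound_integral)
    show "(\<lambda>s. F (f s) - F (g s)) integrable_on {0..t}" using if1 ig1 by (rule integrable_diff)
    show "(\<lambda>s. L * h s) integrable_on {0..t}" using integrable_cmul[OF hi, of L] by simp
    fix s assume s: "s \<in> {0..t}"
    then have s1: "s \<in> {0..1}" using sub by auto
    have "norm (F (f s) - F (g s)) \<le> L * norm (f s - g s)" using L fW gW s1 by auto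
    also have "\<dots> \<le> L * h s"
      using b[OF s1] L0 by (simp add: mult_left_mono)
    finally show "norm (F (f s) - F (g s)) \<le> L * h s" .
  qed
  also have "\<dots> = L * integral {0..t} h" by simp
  finally show ?thesis .
qed

end


context c1f begin

lemma FTC_sol:
  assumes xs: "solU U F x0 x" and t: "t \<in> {0..1}"
  shows "x t = Tm x0 x t"
proof -
  have "((\<lambda>s. F (x s)) has_integral (x t - x 0)) {0..t}"
  proof (rule fundamental_theorem_of_calculus)
    show "0 \<le> t" using t by auto
    fix s assume s: "s \<in> {0..t}"
    then have "(x has_vector_derivative F (x s)) (at s within {0..1})" using xs t unfolding solU_def by auto
    then show "(x has_vector_derivative F (x s)) (at s within {0..t})"
      by (rule has_vector_derivative_within_subset) (use t in auto)
  qed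
  then have "integral {0..t} (\<lambda>s. F (x s)) = x t - x 0" by (rule integral_unique)
  then show ?thesis using xs unfolding Tm_def solU_def by simp
qed

lemma existence:
  assumes xs: "solU U F x0 xs"
  obtains \<delta> C where "\<delta> > 0" "C \<ge> 0"
    "\<And>y0. norm (y0 - x0) < \<delta> \<Longrightarrow> \<exists>y. solU U F y0 y \<and> (\<forall>t\<in>{0..1}. norm (y t - xs t) \<le> C * norm (y0 - x0))"
proof -
  have xc: "continuous_on {0..1} xs" using solU_cont[OF xs] .
  have X: "compact (xs ` {0..1})" "xs ` {0..1} \<subseteq> U"
    using compact_continuous_image[OF xc] xs unfolding solU_def by auto
  obtain e W where e: "e > 0" "compact W" "W \<subseteq> U" "\<And>x. x \<in> xs ` {0..1} \<Longrightarrow> cball x e \<subseteq> W"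
    by (rule thicken[OF X(1) U_open X(2)]) blast
  obtain L where L: "L \<ge> 0" "\<And>a b. a \<in> W \<Longrightarrow> b \<in> W \<Longrightarrow> norm (F a - F b) \<le> L * norm (a - b)"
    using lip_compact[OF e(2,3)] by blast
  have "compact (F ` W)" by (rule compact_continuous_image[OF continuous_on_subset[OF F_cont e(3)] e(2)])
  then obtain M0 where M0: "\<And>x. x \<in> W \<Longrightarrow> norm (F x) \<le> M0"
    using compact_imp_bounded bounded_iff by (metis image_eqI)
  define M where "M = max M0 0"
  have M: "M \<ge> 0" "\<And>x. x \<in> W \<Longrightarrow> norm (F x) \<le> M" using M0 unfolding M_def by force+
  define \<delta> where "\<delta> = e / exp L"
  have main: "\<exists>y. solU U F y0 y \<and> (\<forall>t\<in>{0..1}. norm (y t - xs t) \<le> exp L * norm (y0 - x0))"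
    if y0: "norm (y0 - x0) < \<delta>" for y0
  proof -
    define d where "d = norm (y0 - x0)"
    have d0: "d \<ge> 0" unfolding d_def by simp
    have dexp: "d * exp L < e" using y0 unfolding d_def \<delta>_def by (simp add: field_simps)
    define pic where "pic k = (Tm y0 ^^ k) xs" for k
    have pic0: "pic 0 = xs" unfolding pic_def by simp
    have picS: "pic (Suc k) = Tm y0 (pic k)" for k unfolding pic_def by simp
    have inW: "z \<in> W" if t: "t \<in> {0..1}" and z: "norm (z - xs t) \<le> d * exp L" for t z
    proof -
      have "z \<in> cball (xs t) e" using z dexp by (simp add: dist_norm norm_minus_commute)
      then show ?thesis using e(4) t by blast
    qed
    have Sle: "d * (\<Sum>j<k. (L*t)^j / fact j) \<le> d * exp L" if t: "t \<in> {0..1}" for t k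
    proof -
      have "(\<Sum>j<k. (L*t)^j / fact j) \<le> exp (L * t)" by (rule exp_partial_le) (use L t in auto)
      also have "\<dots> \<le> exp L" using L t by (simp add: mult_left_le)
      finally show ?thesis using d0 by (simp add: mult_left_mono)
    qed
    define Inv where "Inv k \<longleftrightarrow> continuous_on {0..1} (pic k) \<and>
       (\<forall>t\<in>{0..1}. norm (pic k t - xs t) \<le> d * (\<Sum>j<k. (L*t)^j / fact j))" for k
    define Dk where "Dk k \<longleftrightarrow> (\<forall>t\<in>{0..1}. norm (pic (Suc k) t - pic k t) \<le> d * (L*t)^k / fact k)" for k
    have Wk: "pic k t \<in> W" if "Inv k" "t \<in> {0..1}" for k t
    proof -
      have "norm (pic k t - xs t) \<le> d * (\<Sum>j<k. (L*t)^j / fact j)" using that unfolding Inv_def by auto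
      also have "\<dots> \<le> d * exp L" by (rule Sle[OF that(2)])
      finally show ?thesis by (rule inW[OF that(2)])
    qed
    have step: "Inv (Suc k)" if I: "Inv k" and D: "Dk k" for k
    proof -
      have "continuous_on {0..1} (pic (Suc k))" unfolding picS
        by (rule Tm_props(3)[OF e(3) _ Wk M(2)]) (use I in \<open>auto simp: Inv_def\<close>)
      moreover have "norm (pic (Suc k) t - xs t) \<le> d * (\<Sum>j<Suc k. (L*t)^j / fact j)" if t: "t \<in> {0..1}" for t
      proof -
        have "norm (pic (Suc k) t - xs t) \<le> norm (pic (Suc k) t - pic k t) + norm (pic k t - xs t)"
          by (rule norm_diff_triangle_le[where y="pic k t"]) simp_all
        also have "\<dots> \<le> d * (L*t)^k / fact k + d * (\<Sum>j<k. (L*t)^j / fact j)"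
          using I D t unfolding Inv_def Dk_def by (intro add_mono) auto
        also have "\<dots> = d * (\<Sum>j<Suc k. (L*t)^j / fact j)" by (simp add: algebra_simps)
        finally show ?thesis .
      qed
      ultimately show ?thesis unfolding Inv_def by blast
    qed
    have ind: "Inv k \<and> Dk k" for k
    proof (induction k)
      case 0
      have I0: "Inv 0" unfolding Inv_def pic0 using xc by simp
      have "Dk 0" unfolding Dk_def
      proof
        fix t :: real assume t: "t \<in> {0..1}"
        have "pic (Suc 0) t - pic 0 t = Tm y0 xs t - Tm x0 xs t"
          using FTC_sol[OF xs t] by (simp add: picS pic0)
        also have "\<dots> = y0 - x0" unfolding Tm_def by simp
        finally show "norm (pic (Suc 0) t - pic 0 t) \<le> d * (L*t)^0 / fact 0" unfolding d_def by simp
      qed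
      then show ?case using I0 by blast
    next
      case (Suc k)
      then have I: "Inv k" and D: "Dk k" by auto
      have I1: "Inv (Suc k)" by (rule step[OF I D])
      have "Dk (Suc k)" unfolding Dk_def
      proof
        fix t :: real assume t: "t \<in> {0..1}"
        define c where "c = d * L^k / fact k"
        have c0: "c \<ge> 0" unfolding c_def using d0 L by simp
        have hi: "(\<lambda>s. c * s^k) integrable_on {0..t}"
          by (rule integrable_continuous_interval) (intro continuous_intros)
        have "norm (Tm y0 (pic (Suc k)) t - Tm y0 (pic k) t) \<le> L * integral {0..t} (\<lambda>s. c * s^k)"
        proof (rule Tm_diff[OF e(3) _ Wk _ Wk L(2) L(1) _ hi t])
          show "continuous_on {0..1} (pic (Suc k))" "continuous_on {0..1} (pic k)"
            using I I1 unfolding Inv_def by auto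
          show "Inv (Suc k)" "Inv k" by (fact I1, fact I)
          fix s :: real assume s: "s \<in> {0..1}"
          have "norm (pic (Suc k) s - pic k s) \<le> d * (L * s)^k / fact k" using D s unfolding Dk_def by auto
          also have "\<dots> = c * s^k" unfolding c_def by (simp add: power_mult_distrib)
          finally show "norm (pic (Suc k) s - pic k s) \<le> c * s^k" .
        qed
        also have "integral {0..t} (\<lambda>s. c * s^k) = c * (t^Suc k / Suc k)"
          using integral_power_0[of t k] t integral_mult[of "\<lambda>s. s^k" "{0..t}" c]
            integrable_continuous_interval[of 0 t "\<lambda>s. s^k"] by (auto intro!: continuous_intros)
        also have "L * (c * (t^Suc k / Suc k)) = d * (L*t)^Suc k / fact (Suc k)"
          unfolding c_def by (simp add: power_mult_distrib field_simps)
        finally show "norm (pic (Suc (Suc k)) t - pic (Suc k) t) \<le> d * (L*t)^Suc k / fact (Suc k)"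
          by (simp add: picS)
      qed
      then show ?case using I1 by blast
    qed
    define a where "a j = d * L^j / fact j" for j
    have asum: "a sums (d * exp L)"
    proof -
      have "(\<lambda>n. L^n /\<^sub>R fact n) sums exp L" by (rule exp_converges)
      then have "(\<lambda>n. d * (L^n /\<^sub>R fact n)) sums (d * exp L)" by (rule sums_mult)
      then show ?thesis unfolding a_def by (simp add: divide_inverse_commute scaleR_conv_of_real mult.assoc mult.left_commute)
    qed
    have diffb: "norm (pic (Suc j) t - pic j t) \<le> a j" if t: "t \<in> {0..1}" for j t
    proof -
      have "norm (pic (Suc j) t - pic j t) \<le> d * (L*t)^j / fact j" using ind[of j] t unfolding Dk_def by auto
      also have "\<dots> \<le> a j" unfolding a_def
      proof (intro divide_right_mono mult_left_mono power_mono)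
        show "L * t \<le> L" using t L by (simp add: mult_left_le)
        show "0 \<le> L * t" using t L by simp
      qed (use d0 in auto)
      finally show ?thesis .
    qed
    define Df where "Df t j = pic (Suc j) t - pic j t" for t j
    have summ: "summable (Df t)" if t: "t \<in> {0..1}" for t
      by (rule summable_comparison_test[OF _ sums_summable[OF asum]]) (use diffb t in \<open>auto simp: Df_def\<close>)
    define y where "y t = xs t + suminf (Df t)" for t
    define r where "r k = d * exp L - (\<Sum>j<k. a j)" for k
    have tail: "norm (y t - pic k t) \<le> r k" if t: "t \<in> {0..1}" for t k
    proof -
      have tel: "(\<Sum>j<k. Df t j) = pic k t - xs t" unfolding Df_def
        using sum_lessThan_telescope[of "\<lambda>j. pic j t" k] by (simp add: pic0)
      have "y t - pic k t = suminf (Df t) - (\<Sum>j<k. Df t j)" unfolding y_def tel by simp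
      also have "\<dots> = (\<Sum>j. Df t (j + k))" using suminf_split_initial_segment[OF summ[OF t], of k] by simp
      finally have eq: "y t - pic k t = (\<Sum>j. Df t (j + k))" .
      have "norm (\<Sum>j. Df t (j + k)) \<le> (\<Sum>j. a (j + k))"
        by (rule norm_suminf_le) (use diffb t summable_ignore_initial_segment[OF sums_summable[OF asum]] in \<open>auto simp: Df_def\<close>)
      also have "\<dots> = r k" unfolding r_def
        using suminf_split_initial_segment[OF sums_summable[OF asum], of k] sums_unique[OF asum] by simp
      finally show ?thesis using eq by simp
    qed
    have r0: "r \<longlonglongrightarrow> 0"
    proof -
      have "(\<lambda>k. \<Sum>j<k. a j) \<longlonglongrightarrow> d * exp L" using asum unfolding sums_def .
      then have "(\<lambda>k. d * exp L - (\<Sum>j<k. a j)) \<longlonglongrightarrow> d * exp L - d * exp L"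
        by (intro tendsto_diff tendsto_const)
      then show ?thesis unfolding r_def by simp
    qed
    have rnn: "r k \<ge> 0" for k by (rule order_trans[OF norm_ge_zero tail[of 0 k]]) simp
    have conv: "(\<lambda>k. pic k t) \<longlonglongrightarrow> y t" if t: "t \<in> {0..1}" for t
    proof -
      have "(\<lambda>k. pic k t - y t) \<longlonglongrightarrow> 0"
        by (rule Lim_null_comparison[OF _ r0]) (use tail[OF t] in \<open>auto simp: norm_minus_commute\<close>)
      then have "(\<lambda>k. y t + (pic k t - y t)) \<longlonglongrightarrow> y t + 0" by (intro tendsto_add tendsto_const)
      then show ?thesis by simp
    qed
    have ybound: "norm (y t - xs t) \<le> d * exp L" if t: "t \<in> {0..1}" for t
    proof (rule LIMSEQ_le_const2)
      show "(\<lambda>k. norm (pic k t - xs t)) \<longlonglongrightarrow> norm (y t - xs t)"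
        by (intro tendsto_norm tendsto_diff conv[OF t] tendsto_const)
      show "\<exists>N. \<forall>n\<ge>N. norm (pic n t - xs t) \<le> d * exp L"
      proof (intro exI[of _ 0] allI impI)
        fix n :: nat
        have "norm (pic n t - xs t) \<le> d * (\<Sum>j<n. (L*t)^j / fact j)" using ind[of n] t unfolding Inv_def by auto
        also have "\<dots> \<le> d * exp L" by (rule Sle[OF t])
        finally show "norm (pic n t - xs t) \<le> d * exp L" .
      qed
    qed
    have yW: "y t \<in> W" if t: "t \<in> {0..1}" for t using inW[OF t ybound[OF t]] .
    have ylip: "norm (y t - y s) \<le> M * \<bar>t - s\<bar>" if st: "s \<in> {0..1}" "t \<in> {0..1}" for s t
    proof (rule LIMSEQ_le_const2)
      show "(\<lambda>k. norm (pic (Suc k) t - pic (Suc k) s)) \<longlonglongrightarrow> norm (y t - y s)"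
        by (intro tendsto_norm tendsto_diff LIMSEQ_Suc conv st)
      show "\<exists>N. \<forall>n\<ge>N. norm (pic (Suc n) t - pic (Suc n) s) \<le> M * \<bar>t - s\<bar>"
      proof (intro exI allI impI)
        fix n :: nat
        show "norm (pic (Suc n) t - pic (Suc n) s) \<le> M * \<bar>t - s\<bar>" unfolding picS
          by (rule Tm_props(4)[OF e(3) _ Wk M(2) st]) (use ind[of n] in \<open>auto simp: Inv_def\<close>)
      qed
    qed
    have yc: "continuous_on {0..1} y"
      unfolding continuous_on_iff
    proof (intro ballI allI impI)
      fix t e' :: real assume t: "t \<in> {0..1}" and e': "e' > 0"
      show "\<exists>d>0. \<forall>x'\<in>{0..1}. dist x' t < d \<longrightarrow> dist (y x') (y t) < e'"
      proof (intro exI conjI ballI impI)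
        show "e' / (M + 1) > 0" using e' M by simp
        fix s assume s: "s \<in> {0..1}" and ds: "dist s t < e' / (M + 1)"
        have "dist (y s) (y t) \<le> M * \<bar>s - t\<bar>" using ylip[OF t s] by (simp add: dist_norm)
        also have "\<dots> \<le> M * (e' / (M + 1))" using ds M by (intro mult_left_mono) (auto simp: dist_real_def)
        also have "\<dots> < e'" using M e' by (simp add: field_simps)
        finally show "dist (y s) (y t) < e'" .
      qed
    qed
    have yfix: "y t = Tm y0 y t" if t: "t \<in> {0..1}" for t
    proof -
      have A: "(\<lambda>k. pic (Suc k) t) \<longlonglongrightarrow> y t" by (rule LIMSEQ_Suc[OF conv[OF t]])
      have "(\<lambda>k. pic (Suc k) t - Tm y0 y t) \<longlonglongrightarrow> 0"
      proof (rule Lim_null_comparison[where g="\<lambda>k. L * r k"])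
        show "(\<lambda>k. L * r k) \<longlonglongrightarrow> 0" using tendsto_mult_right_zero[OF r0] by simp
        show "\<forall>\<^sub>F k in sequentially. norm (pic (Suc k) t - Tm y0 y t) \<le> L * r k"
        proof (rule always_eventually, rule allI)
          fix k
          have "norm (Tm y0 y t - Tm y0 (pic k) t) \<le> L * integral {0..t} (\<lambda>s. r k)"
          proof (rule Tm_diff[OF e(3) yc yW _ Wk L(2) L(1) _ _ t])
            show "continuous_on {0..1} (pic k)" "Inv k" using ind[of k] unfolding Inv_def by auto
            show "\<And>s. s \<in> {0..1} \<Longrightarrow> norm (y s - pic k s) \<le> r k" using tail by blast
          qed auto
          also have "\<dots> = L * (t * r k)" using t by simp
          also have "\<dots> \<le> L * r k" using t L rnn[of k] by (intro mult_left_mono) (auto simp: mult_left_le_one_le)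
          finally show "norm (pic (Suc k) t - Tm y0 y t) \<le> L * r k" by (simp add: picS norm_minus_commute)
        qed
      qed
      then have "(\<lambda>k. Tm y0 y t + (pic (Suc k) t - Tm y0 y t)) \<longlonglongrightarrow> Tm y0 y t + 0"
        by (intro tendsto_add tendsto_const)
      then have B: "(\<lambda>k. pic (Suc k) t) \<longlonglongrightarrow> Tm y0 y t" by simp
      show ?thesis using LIMSEQ_unique[OF A B] .
    qed
    have "solU U F y0 y" unfolding solU_def
    proof (intro conjI ballI)
      show "y 0 = y0" using yfix[of 0] Tm_props(5)[OF e(3) yc yW M(2)] by simp
      fix t :: real assume t: "t \<in> {0..1}"
      show "y t \<in> U" using yW[OF t] e(3) by blast
      show "(y has_vector_derivative F (y t)) (at t within {0..1})"
        by (rule has_vector_derivative_transform[OF t _ Tm_props(2)[OF e(3) yc yW M(2) t]])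
           (use yfix in auto)
    qed
    then show ?thesis using ybound unfolding d_def by (auto simp: mult.commute)
  qed
  show ?thesis
    by (rule that[of \<delta> "exp L"]) (use e(1) main in \<open>auto simp: \<delta>_def\<close>)
qed

end


lemma mv_linear_left: "linear (\<lambda>A::real^'n^'m. A *v b)"
  unfolding linear_iff matrix_vector_mult_def
  by (auto simp: vec_eq_iff sum.distrib algebra_simps sum_distrib_left)

lemma bb_mv: "bounded_bilinear (\<lambda>(A::real^'n^'m) b. A *v b)"
proof -
  have "bilinear (\<lambda>(A::real^'n^'m) b. A *v b)"
    unfolding bilinear_def using mv_linear_left matrix_vector_mul_linear by auto
  then show ?thesis using bilinear_conv_bounded_bilinear by blast
qed

lemma bl_mv_left: "bounded_linear (\<lambda>A::real^'n^'m. A *v b)"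
  using mv_linear_left linear_conv_bounded_linear by blast

lemma sym_inner:
  fixes A :: "real^'n^'n"
  assumes "transpose A = A"
  shows "x \<bullet> (A *v y) = y \<bullet> (A *v x)"
proof -
  have "x \<bullet> (A *v y) = (x v* A) \<bullet> y" by (simp add: dot_lmul_matrix)
  also have "x v* A = A *v x" using vector_transpose_matrix[of x A] assms by simp
  finally show ?thesis by (simp add: inner_commute)
qed

lemma sum_basis_inner:
  fixes l :: "'a::euclidean_space \<Rightarrow> real"
  assumes "linear l"
  shows "(\<Sum>b\<in>Basis. l b *\<^sub>R b) \<bullet> v = l v"
proof -
  have "l v = l (\<Sum>b\<in>Basis. (v \<bullet> b) *\<^sub>R b)" by (simp add: euclidean_representation)
  also have "\<dots> = (\<Sum>b\<in>Basis. (v \<bullet> b) * l b)"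
    using assms by (simp add: linear_sum linear_cmul)
  also have "\<dots> = (\<Sum>b\<in>Basis. l b *\<^sub>R b) \<bullet> v"
    by (simp add: inner_sum_left inner_sum_right inner_commute mult.commute)
  finally show ?thesis by simp
qed

lemma grad_eq:
  assumes "(f has_derivative f') (at x)"
  shows "grad f x = (\<Sum>b\<in>Basis. f' b *\<^sub>R b)"
  unfolding grad_def using frechet_derivative_at[OF assms] by simp

lemma grad_inner:
  assumes "(f has_derivative f') (at x)"
  shows "grad f x \<bullet> v = f' v"
  using grad_eq[OF assms] sum_basis_inner[OF has_derivative_linear[OF assms]] by simp

lemma linear_transpose_m: "linear (transpose :: real^'n^'m \<Rightarrow> real^'m^'n)"
  unfolding linear_iff transpose_def by (auto simp: vec_eq_iff)


lemma line_deriv: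
  fixes \<phi> :: "'a::real_normed_vector \<Rightarrow> real"
  assumes "(\<phi> has_derivative \<phi>') (at (x + \<tau> *\<^sub>R a))"
  shows "((\<lambda>\<tau>. \<phi> (x + \<tau> *\<^sub>R a)) has_real_derivative \<phi>' a) (at \<tau>)"
proof -
  have l: "((\<lambda>t. x + t *\<^sub>R a) has_derivative (\<lambda>h. h *\<^sub>R a)) (at \<tau>)"
    by (auto intro!: derivative_eq_intros)
  have "((\<lambda>t. \<phi> (x + t *\<^sub>R a)) has_derivative (\<lambda>h. \<phi>' (h *\<^sub>R a))) (at \<tau>)"
    using has_derivative_compose[OF l assms] by (simp add: o_def)
  moreover have "(\<lambda>h. \<phi>' (h *\<^sub>R a)) = (\<lambda>h. h * \<phi>' a)"
    using linear_cmul[OF has_derivative_linear[OF assms]] by auto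
  ultimately have D: "((\<lambda>t. \<phi> (x + t *\<^sub>R a)) has_derivative (\<lambda>h. h * \<phi>' a)) (at \<tau>)" by simp
  show ?thesis unfolding has_field_derivative_def
    by (rule has_derivative_eq_rhs[OF D]) (simp add: fun_eq_iff mult.commute)
qed

lemma mixed_mvt:
  fixes \<phi> :: "'a::real_normed_vector \<Rightarrow> real"
  assumes S: "ball x r \<subseteq> S"
   and d1: "\<And>y. y \<in> S \<Longrightarrow> (\<phi> has_derivative Pa y) (at y)"
   and d2: "\<And>y u. y \<in> S \<Longrightarrow> ((\<lambda>y. Pa y u) has_derivative (\<lambda>v. Pb y v u)) (at y)"
   and s: "s > 0" "s * (norm a + norm b) < r"
  shows "\<exists>\<xi>. dist \<xi> x < r \<and>
     \<phi> (x + s *\<^sub>R b + s *\<^sub>R a) - \<phi> (x + s *\<^sub>R a) - (\<phi> (x + s *\<^sub>R b) - \<phi> x) = s^2 * Pb \<xi> b a"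
proof -
  have inb: "x + \<tau> *\<^sub>R a + \<sigma> *\<^sub>R b \<in> S" if "\<tau> \<in> {0..s}" "\<sigma> \<in> {0..s}" for \<tau> \<sigma>
  proof -
    have "norm (\<tau> *\<^sub>R a + \<sigma> *\<^sub>R b) \<le> \<tau> * norm a + \<sigma> * norm b"
      using that norm_triangle_ineq[of "\<tau> *\<^sub>R a" "\<sigma> *\<^sub>R b"] by auto
    also have "\<dots> \<le> s * norm a + s * norm b" using that by (intro add_mono mult_right_mono) auto
    also have "\<dots> < r" using s by (simp add: algebra_simps)
    finally have "dist (x + \<tau> *\<^sub>R a + \<sigma> *\<^sub>R b) x < r" by (simp add: dist_norm add.assoc)
    then have "x + \<tau> *\<^sub>R a + \<sigma> *\<^sub>R b \<in> ball x r" by (simp add: dist_commute)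
    then show ?thesis using S by blast
  qed
  define g where "g = (\<lambda>\<tau>. \<phi> (x + s *\<^sub>R b + \<tau> *\<^sub>R a) - \<phi> (x + \<tau> *\<^sub>R a))"
  have gd: "(g has_real_derivative (Pa (x + s *\<^sub>R b + \<tau> *\<^sub>R a) a - Pa (x + \<tau> *\<^sub>R a) a)) (at \<tau>)"
    if t: "\<tau> \<in> {0..s}" for \<tau>
  proof -
    have p1: "x + s *\<^sub>R b + \<tau> *\<^sub>R a \<in> S" using inb[OF t, of s] s by (simp add: algebra_simps)
    have p2: "x + \<tau> *\<^sub>R a \<in> S" using inb[OF t, of 0] s by simp
    have D1: "((\<lambda>\<tau>. \<phi> (x + s *\<^sub>R b + \<tau> *\<^sub>R a)) has_real_derivative Pa (x + s *\<^sub>R b + \<tau> *\<^sub>R a) a) (at \<tau>)"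
      by (rule line_deriv[OF d1[OF p1]])
    have D2: "((\<lambda>\<tau>. \<phi> (x + \<tau> *\<^sub>R a)) has_real_derivative Pa (x + \<tau> *\<^sub>R a) a) (at \<tau>)"
      by (rule line_deriv[OF d1[OF p2]])
    show ?thesis unfolding g_def by (rule DERIV_diff[OF D1 D2])
  qed
  have "\<exists>l z. 0 < z \<and> z < s \<and> DERIV g z :> l \<and> g s - g 0 = (s - 0) * l"
  proof (rule MVT)
    show "continuous_on {0..s} g"
      using gd DERIV_isCont continuous_at_imp_continuous_on by blast
    show "g differentiable (at z)" if "0 < z" "z < s" for z
      using gd[of z] that real_differentiable_def by auto
  qed (use s in auto)
  then obtain l \<tau>1 where t1: "0 < \<tau>1" "\<tau>1 < s" "DERIV g \<tau>1 :> l" "g s - g 0 = s * l" by auto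
  have l: "l = Pa (x + s *\<^sub>R b + \<tau>1 *\<^sub>R a) a - Pa (x + \<tau>1 *\<^sub>R a) a"
    using DERIV_unique[OF t1(3) gd[of \<tau>1]] t1 by auto
  define h where "h = (\<lambda>\<sigma>. Pa (x + \<tau>1 *\<^sub>R a + \<sigma> *\<^sub>R b) a)"
  have hd: "(h has_real_derivative Pb (x + \<tau>1 *\<^sub>R a + \<sigma> *\<^sub>R b) b a) (at \<sigma>)" if t: "\<sigma> \<in> {0..s}" for \<sigma>
    unfolding h_def
    by (rule line_deriv[where \<phi>'="\<lambda>v. Pb (x + \<tau>1 *\<^sub>R a + \<sigma> *\<^sub>R b) v a"], rule d2, rule inb)
       (use t t1 in auto)
  have "\<exists>l z. 0 < z \<and> z < s \<and> DERIV h z :> l \<and> h s - h 0 = (s - 0) * l"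
  proof (rule MVT)
    show "continuous_on {0..s} h"
      using hd DERIV_isCont continuous_at_imp_continuous_on by blast
    show "h differentiable (at z)" if "0 < z" "z < s" for z
      using hd[of z] that real_differentiable_def by auto
  qed (use s in auto)
  then obtain m \<sigma>1 where s1: "0 < \<sigma>1" "\<sigma>1 < s" "DERIV h \<sigma>1 :> m" "h s - h 0 = s * m" by auto
  have m: "m = Pb (x + \<tau>1 *\<^sub>R a + \<sigma>1 *\<^sub>R b) b a"
    using DERIV_unique[OF s1(3) hd[of \<sigma>1]] s1 by auto
  have "l = h s - h 0" unfolding l h_def by (simp add: algebra_simps)
  then have eq: "g s - g 0 = s^2 * Pb (x + \<tau>1 *\<^sub>R a + \<sigma>1 *\<^sub>R b) b a"
    using t1(4) s1(4) m by (simp add: power2_eq_square)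
  have "x + \<tau>1 *\<^sub>R a + \<sigma>1 *\<^sub>R b \<in> ball x r"
  proof -
    have "norm (\<tau>1 *\<^sub>R a + \<sigma>1 *\<^sub>R b) \<le> \<tau>1 * norm a + \<sigma>1 * norm b"
      using t1 s1 norm_triangle_ineq[of "\<tau>1 *\<^sub>R a" "\<sigma>1 *\<^sub>R b"] by auto
    also have "\<dots> \<le> s * norm a + s * norm b" using t1 s1 by (intro add_mono mult_right_mono) auto
    also have "\<dots> < r" using s by (simp add: algebra_simps)
    finally have "dist (x + \<tau>1 *\<^sub>R a + \<sigma>1 *\<^sub>R b) x < r" by (simp add: dist_norm add.assoc)
    then show ?thesis by (simp add: dist_commute)
  qed
  moreover have "g s - g 0 = \<phi> (x + s *\<^sub>R b + s *\<^sub>R a) - \<phi> (x + s *\<^sub>R a) - (\<phi> (x + s *\<^sub>R b) - \<phi> x)"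
    unfolding g_def by simp
  ultimately show ?thesis using eq by (intro exI[of _ "x + \<tau>1 *\<^sub>R a + \<sigma>1 *\<^sub>R b"]) (simp add: dist_commute)
qed

lemma schwarz:
  fixes \<phi> :: "'a::real_normed_vector \<Rightarrow> real"
  assumes S: "open S" "x \<in> S"
   and d1: "\<And>y. y \<in> S \<Longrightarrow> (\<phi> has_derivative Pa y) (at y)"
   and d2: "\<And>y u. y \<in> S \<Longrightarrow> ((\<lambda>y. Pa y u) has_derivative (\<lambda>v. Pb y v u)) (at y)"
   and c2: "\<And>u v. continuous (at x) (\<lambda>y. Pb y u v)"
  shows "Pb x a b = Pb x b a"
proof -
  have "\<bar>Pb x a b - Pb x b a\<bar> \<le> 2 * e" if e: "e > 0" for e
  proof -
    obtain r1 where r1: "r1 > 0" "\<And>y. dist y x < r1 \<Longrightarrow> \<bar>Pb y b a - Pb x b a\<bar> < e"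
      using c2[of b a] e unfolding continuous_at_eps_delta by (metis dist_real_def)
    obtain r2 where r2: "r2 > 0" "\<And>y. dist y x < r2 \<Longrightarrow> \<bar>Pb y a b - Pb x a b\<bar> < e"
      using c2[of a b] e unfolding continuous_at_eps_delta by (metis dist_real_def)
    obtain r3 where r3: "r3 > 0" "ball x r3 \<subseteq> S" using S open_contains_ball by blast
    define r where "r = min r1 (min r2 r3)"
    have r: "r > 0" "ball x r \<subseteq> S" using r1 r2 r3 unfolding r_def by auto
    define s where "s = r / (2 * (norm a + norm b + 1))"
    have s: "s > 0" "s * (norm a + norm b) < r"
    proof -
      have "0 < 2 * (norm a + norm b + 1)" by (simp add: add_nonneg_pos)
      then show "s > 0" unfolding s_def using r by (simp add: divide_pos_pos)
      have "s * (norm a + norm b) \<le> s * (norm a + norm b + 1)" using \<open>s > 0\<close> by simp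
      also have "\<dots> = r / 2"
      proof -
        have "norm a + norm b + 1 > 0" by (simp add: add_nonneg_pos)
        then show ?thesis unfolding s_def by (simp add: field_simps)
      qed
      finally show "s * (norm a + norm b) < r" using r by simp
    qed
    have s': "s * (norm b + norm a) < r" using s by (simp add: add.commute)
    obtain \<xi> where \<xi>: "dist \<xi> x < r"
      "\<phi> (x + s *\<^sub>R b + s *\<^sub>R a) - \<phi> (x + s *\<^sub>R a) - (\<phi> (x + s *\<^sub>R b) - \<phi> x) = s^2 * Pb \<xi> b a"
      using mixed_mvt[OF r(2) d1 d2 s] by blast
    obtain \<xi>' where \<xi>': "dist \<xi>' x < r"
      "\<phi> (x + s *\<^sub>R a + s *\<^sub>R b) - \<phi> (x + s *\<^sub>R b) - (\<phi> (x + s *\<^sub>R a) - \<phi> x) = s^2 * Pb \<xi>' a b"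
      using mixed_mvt[OF r(2) d1 d2 s(1) s'] by blast
    have "x + s *\<^sub>R a + s *\<^sub>R b = x + s *\<^sub>R b + s *\<^sub>R a" by (simp add: algebra_simps)
    then have eq: "s^2 * Pb \<xi> b a = s^2 * Pb \<xi>' a b" using \<xi>(2) \<xi>'(2) by (simp add: algebra_simps)
    have s2: "s^2 > 0" using s by simp
    then have eq2: "Pb \<xi> b a = Pb \<xi>' a b" using eq by simp
    have "\<bar>Pb \<xi> b a - Pb x b a\<bar> < e" using r1 \<xi>(1) unfolding r_def by auto
    moreover have "\<bar>Pb \<xi>' a b - Pb x a b\<bar> < e" using r2 \<xi>'(1) unfolding r_def by auto
    ultimately show ?thesis using eq2 by linarith
  qed
  note * = this
  have "\<bar>Pb x a b - Pb x b a\<bar> \<le> 0"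
  proof (rule field_le_epsilon)
    fix e :: real assume "e > 0"
    then show "\<bar>Pb x a b - Pb x b a\<bar> \<le> 0 + e" using *[of "e/2"] by simp
  qed
  then show ?thesis by simp
qed


lemma bl_apply_left: "bounded_linear (\<lambda>T::'a::real_normed_vector \<Rightarrow>\<^sub>L 'b::real_normed_vector. blinfun_apply T u)"
  using bounded_bilinear.bounded_linear_left[OF bounded_bilinear_blinfun_apply] by simp

locale Kset =
  fixes M :: "(real^'n) set" and K :: "real^'n \<Rightarrow> real^'n^'n"
    and K1 :: "real^'n \<Rightarrow> (real^'n) \<Rightarrow>\<^sub>L (real^'n^'n)"
    and K2 :: "real^'n \<Rightarrow> (real^'n) \<Rightarrow>\<^sub>L ((real^'n) \<Rightarrow>\<^sub>L (real^'n^'n))"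
  assumes M_open: "open M" and K_sym: "\<And>x. x \<in> M \<Longrightarrow> transpose (K x) = K x"
   and K_der: "\<And>x. x \<in> M \<Longrightarrow> (K has_derivative blinfun_apply (K1 x)) (at x)"
   and K1_der: "\<And>x. x \<in> M \<Longrightarrow> (K1 has_derivative blinfun_apply (K2 x)) (at x)"
   and K2_cont: "continuous_on M K2"
begin

lemma K1_apply_der: "x \<in> M \<Longrightarrow> ((\<lambda>y. blinfun_apply (K1 y) u) has_derivative (\<lambda>v. blinfun_apply (blinfun_apply (K2 x) v) u)) (at x)"
  using bounded_linear.has_derivative[OF bl_apply_left K1_der] by simp

lemma K1_sym: assumes x: "x \<in> M" shows "transpose (blinfun_apply (K1 x) v) = blinfun_apply (K1 x) v"
proof -
  have bt: "bounded_linear (transpose :: real^'n^'n \<Rightarrow> real^'n^'n)"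
    using linear_transpose_m linear_conv_bounded_linear by blast
  have "((\<lambda>y. transpose (K y)) has_derivative (\<lambda>v. transpose (blinfun_apply (K1 x) v))) (at x)"
    using bounded_linear.has_derivative[OF bt K_der[OF x]] .
  then have "(K has_derivative (\<lambda>v. transpose (blinfun_apply (K1 x) v))) (at x)"
    by (rule has_derivative_transform_within_open[OF _ M_open x]) (use K_sym in auto)
  from has_derivative_unique[OF K_der[OF x] this] show ?thesis by metis
qed

lemma K2_sym: assumes x: "x \<in> M"
  shows "blinfun_apply (blinfun_apply (K2 x) a) b = blinfun_apply (blinfun_apply (K2 x) b) a"
proof -
  have key: "w \<bullet> blinfun_apply (blinfun_apply (K2 x) a) b = w \<bullet> blinfun_apply (blinfun_apply (K2 x) b) a" for w
  proof (rule schwarz[where S=M and \<phi>="\<lambda>y. w \<bullet> K y" and Pa="\<lambda>y u. w \<bullet> blinfun_apply (K1 y) u"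
        and Pb="\<lambda>y v u. w \<bullet> blinfun_apply (blinfun_apply (K2 y) v) u"])
    show "open M" "x \<in> M" by (fact M_open, fact x)
    fix y assume y: "y \<in> M"
    show "((\<lambda>y. w \<bullet> K y) has_derivative (\<lambda>u. w \<bullet> blinfun_apply (K1 y) u)) (at y)"
      by (rule has_derivative_inner_right[OF K_der[OF y]])
    fix u
    show "((\<lambda>y. w \<bullet> blinfun_apply (K1 y) u) has_derivative (\<lambda>v. w \<bullet> blinfun_apply (blinfun_apply (K2 y) v) u)) (at y)"
      by (rule has_derivative_inner_right[OF K1_apply_der[OF y]])
  next
    fix u v
    have c: "continuous (at x) K2" using K2_cont M_open x continuous_on_eq_continuous_at by blast
    have bl: "bounded_linear (\<lambda>T::(real^'n) \<Rightarrow>\<^sub>L ((real^'n) \<Rightarrow>\<^sub>L (real^'n^'n)). w \<bullet> blinfun_apply (blinfun_apply T u) v)"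
      by (rule bounded_linear_compose[OF bounded_linear_inner_right])
         (rule bounded_linear_compose[OF bl_apply_left bl_apply_left])
    show "continuous (at x) (\<lambda>y. w \<bullet> blinfun_apply (blinfun_apply (K2 y) u) v)"
      using bounded_linear.continuous[OF bl c] by simp
  qed
  have "(blinfun_apply (blinfun_apply (K2 x) a) b - blinfun_apply (blinfun_apply (K2 x) b) a) \<bullet>
        (blinfun_apply (blinfun_apply (K2 x) a) b - blinfun_apply (blinfun_apply (K2 x) b) a) = 0"
    using key[of "blinfun_apply (blinfun_apply (K2 x) a) b - blinfun_apply (blinfun_apply (K2 x) b) a"]
    by (simp add: inner_diff_right)
  then show ?thesis by simp
qed

definition Gq :: "real^'n \<Rightarrow> real^'n \<Rightarrow> real^'n \<Rightarrow> real^'n" where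
  "Gq x a b = (\<Sum>i\<in>Basis. (a \<bullet> (blinfun_apply (K1 x) i *v b)) *\<^sub>R i)"

definition Hq :: "real^'n \<Rightarrow> real^'n \<Rightarrow> real^'n \<Rightarrow> real^'n" where
  "Hq x a v = (\<Sum>i\<in>Basis. (a \<bullet> (blinfun_apply (blinfun_apply (K2 x) v) i *v a)) *\<^sub>R i)"

lemma Kb_der: "x \<in> M \<Longrightarrow> ((\<lambda>y. K y *v b) has_derivative (\<lambda>v. blinfun_apply (K1 x) v *v b)) (at x)"
  using bounded_linear.has_derivative[OF bl_mv_left K_der] by simp

lemma aKb_der: "x \<in> M \<Longrightarrow> ((\<lambda>y. a \<bullet> (K y *v b)) has_derivative (\<lambda>v. a \<bullet> (blinfun_apply (K1 x) v *v b))) (at x)"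
  by (rule has_derivative_inner_right[OF Kb_der])

lemma grad_K: "x \<in> M \<Longrightarrow> grad (\<lambda>y. a \<bullet> (K y *v b)) x = Gq x a b"
  unfolding Gq_def using grad_eq[OF aKb_der] by simp

lemma Gq_inner: "x \<in> M \<Longrightarrow> Gq x a b \<bullet> v = a \<bullet> (blinfun_apply (K1 x) v *v b)"
  using grad_inner[OF aKb_der] grad_K by metis

lemma fd_Kp: "x \<in> M \<Longrightarrow> frechet_derivative (\<lambda>y. K y *v b) (at x) = (\<lambda>v. blinfun_apply (K1 x) v *v b)"
  using frechet_derivative_at[OF Kb_der] by simp

lemma Gq_der: "x \<in> M \<Longrightarrow> ((\<lambda>y. Gq y a b) has_derivative
    (\<lambda>v. \<Sum>i\<in>Basis. (a \<bullet> (blinfun_apply (blinfun_apply (K2 x) v) i *v b)) *\<^sub>R i)) (at x)"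
  unfolding Gq_def
  apply (rule has_derivative_sum)
  apply (rule has_derivative_scaleR_left)
  apply (rule has_derivative_inner_right)
  apply (rule bounded_linear.has_derivative[OF bl_mv_left])
  apply (rule K1_apply_der)
  apply assumption
  done

lemma fd_grad: assumes x: "x \<in> M"
  shows "frechet_derivative (\<lambda>y. grad (\<lambda>x. a \<bullet> (K x *v a)) y) (at x) = Hq x a"
proof -
  have "((\<lambda>y. grad (\<lambda>x. a \<bullet> (K x *v a)) y) has_derivative
    (\<lambda>v. \<Sum>i\<in>Basis. (a \<bullet> (blinfun_apply (blinfun_apply (K2 x) v) i *v a)) *\<^sub>R i)) (at x)"
    by (rule has_derivative_transform_within_open[OF Gq_der[OF x] M_open x]) (simp add: grad_K)
  from frechet_derivative_at[OF this] show ?thesis unfolding Hq_def by (simp add: fun_eq_iff)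
qed

lemma Hq_inner: "x \<in> M \<Longrightarrow> Hq x a v \<bullet> w = a \<bullet> (blinfun_apply (blinfun_apply (K2 x) v) w *v a)"
proof -
  have bl: "bounded_linear (\<lambda>w. a \<bullet> (blinfun_apply (blinfun_apply (K2 x) v) w *v a))"
    by (rule bounded_linear_compose[OF bounded_linear_inner_right])
       (rule bounded_linear_compose[OF bl_mv_left blinfun.bounded_linear_right])
  show ?thesis unfolding Hq_def using sum_basis_inner[OF bounded_linear.linear[OF bl]] by simp
qed

end


lemma bb_mv': "bounded_bilinear ((*v) :: real^'n^'m \<Rightarrow> real^'n \<Rightarrow> real^'m)"
  using bb_mv by (simp add: case_prod_beta)

context Kset begin

definition FF :: "(real^'n) \<times> (real^'n) \<Rightarrow> (real^'n) \<times> (real^'n)" where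
  "FF z = (K (fst z) *v snd z, -(1/2) *\<^sub>R Gq (fst z) (snd z) (snd z))"

definition DFF :: "(real^'n) \<times> (real^'n) \<Rightarrow> (real^'n) \<times> (real^'n) \<Rightarrow> (real^'n) \<times> (real^'n)" where
  "DFF z h = (blinfun_apply (K1 (fst z)) (fst h) *v snd z + K (fst z) *v snd h,
     -(1/2) *\<^sub>R (Hq (fst z) (snd z) (fst h) + Gq (fst z) (snd h) (snd z) + Gq (fst z) (snd z) (snd h)))"

lemma FF_der: assumes z: "fst z \<in> M" shows "(FF has_derivative DFF z) (at z)"
proof -
  have f1: "((\<lambda>z. K (fst z)) has_derivative (\<lambda>h. blinfun_apply (K1 (fst z)) (fst h))) (at z)"
    using has_derivative_compose[OF has_derivative_fst[OF has_derivative_ident] K_der[OF z]] .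
  have f2: "((\<lambda>z. snd z) has_derivative (\<lambda>h. snd h)) (at z)"
    using has_derivative_snd[OF has_derivative_ident] .
  have A: "((\<lambda>z. K (fst z) *v snd z) has_derivative
      (\<lambda>h. K (fst z) *v snd h + blinfun_apply (K1 (fst z)) (fst h) *v snd z)) (at z)"
    using bounded_bilinear.FDERIV[OF bb_mv' f1 f2] .
  have f3: "((\<lambda>z. blinfun_apply (K1 (fst z)) i) has_derivative
      (\<lambda>h. blinfun_apply (blinfun_apply (K2 (fst z)) (fst h)) i)) (at z)" for i
    using has_derivative_compose[OF has_derivative_fst[OF has_derivative_ident] K1_apply_der[OF z]] .
  have B: "((\<lambda>z. blinfun_apply (K1 (fst z)) i *v snd z) has_derivative
      (\<lambda>h. blinfun_apply (K1 (fst z)) i *v snd h + blinfun_apply (blinfun_apply (K2 (fst z)) (fst h)) i *v snd z)) (at z)" for i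
    using bounded_bilinear.FDERIV[OF bb_mv' f3 f2] .
  have C: "((\<lambda>z. snd z \<bullet> (blinfun_apply (K1 (fst z)) i *v snd z)) has_derivative
      (\<lambda>h. snd z \<bullet> (blinfun_apply (K1 (fst z)) i *v snd h + blinfun_apply (blinfun_apply (K2 (fst z)) (fst h)) i *v snd z)
          + snd h \<bullet> (blinfun_apply (K1 (fst z)) i *v snd z))) (at z)" for i
    using has_derivative_inner[OF f2 B] .
  have D: "((\<lambda>z. -(1/2) *\<^sub>R (\<Sum>i\<in>Basis. (snd z \<bullet> (blinfun_apply (K1 (fst z)) i *v snd z)) *\<^sub>R i)) has_derivative
      (\<lambda>h. -(1/2) *\<^sub>R (\<Sum>i\<in>Basis. (snd z \<bullet> (blinfun_apply (K1 (fst z)) i *v snd h + blinfun_apply (blinfun_apply (K2 (fst z)) (fst h)) i *v snd z)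
          + snd h \<bullet> (blinfun_apply (K1 (fst z)) i *v snd z)) *\<^sub>R i))) (at z)"
    by (rule has_derivative_scaleR_right, rule has_derivative_sum, rule has_derivative_scaleR_left, rule C)
  have E: "(FF has_derivative (\<lambda>h. (K (fst z) *v snd h + blinfun_apply (K1 (fst z)) (fst h) *v snd z,
      -(1/2) *\<^sub>R (\<Sum>i\<in>Basis. (snd z \<bullet> (blinfun_apply (K1 (fst z)) i *v snd h + blinfun_apply (blinfun_apply (K2 (fst z)) (fst h)) i *v snd z)
          + snd h \<bullet> (blinfun_apply (K1 (fst z)) i *v snd z)) *\<^sub>R i)))) (at z)"
    unfolding FF_def Gq_def by (rule has_derivative_Pair[OF A D])
  show ?thesis
    by (rule has_derivative_eq_rhs[OF E])
       (simp add: fun_eq_iff DFF_def Gq_def Hq_def inner_add_right scaleR_add_left sum.distrib algebra_simps)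
qed

lemma K_cont: "continuous_on M K"
  using K_der has_derivative_continuous continuous_at_imp_continuous_on by blast

lemma K1_cont: "continuous_on M K1"
  using K1_der has_derivative_continuous continuous_at_imp_continuous_on by blast

lemma DFF_cont: "continuous_on ((M \<times> UNIV) \<times> UNIV) (\<lambda>w. DFF (fst w) (snd w))"
proof -
  let ?S = "(M \<times> (UNIV :: (real^'n) set)) \<times> (UNIV :: ((real^'n) \<times> (real^'n)) set)"
  have cK: "continuous_on ?S (\<lambda>w. K (fst (fst w)))"
    by (rule continuous_on_compose2[OF K_cont]) (auto intro!: continuous_intros)
  have cK1: "continuous_on ?S (\<lambda>w. K1 (fst (fst w)))"
    by (rule continuous_on_compose2[OF K1_cont]) (auto intro!: continuous_intros)
  have cK2: "continuous_on ?S (\<lambda>w. K2 (fst (fst w)))"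
    by (rule continuous_on_compose2[OF K2_cont]) (auto intro!: continuous_intros)
  note bl = bounded_bilinear.continuous_on[OF bounded_bilinear_blinfun_apply]
  note mv = bounded_bilinear.continuous_on[OF bb_mv']
  show ?thesis unfolding DFF_def Gq_def Hq_def
    by (intro continuous_intros bl mv cK cK1 cK2)
qed

lemma c1f_FF: "c1f (M \<times> UNIV) FF DFF"
proof
  show "open (M \<times> (UNIV :: (real^'n) set))" using M_open by (simp add: open_Times)
  show "\<And>x. x \<in> M \<times> UNIV \<Longrightarrow> (FF has_derivative DFF x) (at x)" using FF_der by auto
  show "continuous_on ((M \<times> UNIV) \<times> UNIV) (\<lambda>z. DFF (fst z) (snd z))" by (rule DFF_cont)
qed

lemma FF_eq: "q \<in> M \<Longrightarrow> FF (q, p) = (K q *v p, - (1/2) *\<^sub>R grad (\<lambda>x. p \<bullet> (K x *v p)) q)"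
  unfolding FF_def by (simp add: grad_K)

lemma ham_solU:
  assumes "ham_sol M K q0 p0 q p"
  shows "solU (M \<times> UNIV) FF (q0, p0) (\<lambda>t. (q t, p t))"
  unfolding solU_def
proof (intro conjI ballI)
  show "(q 0, p 0) = (q0, p0)" using assms unfolding ham_sol_def by simp
  fix t :: real assume t: "t \<in> {0..1}"
  have h: "q t \<in> M" "(q has_vector_derivative (K (q t) *v p t)) (at t within {0..1})"
     "(p has_vector_derivative (- (1/2) *\<^sub>R grad (\<lambda>x. p t \<bullet> (K x *v p t)) (q t))) (at t within {0..1})"
    using assms t unfolding ham_sol_def by auto
  show "(q t, p t) \<in> M \<times> UNIV" using h by simp
  show "((\<lambda>t. (q t, p t)) has_vector_derivative FF (q t, p t)) (at t within {0..1})"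
    unfolding FF_eq[OF h(1)] by (rule has_vector_derivative_Pair[OF h(2) h(3)])
qed

lemma vd_fst: "(x has_vector_derivative v) F \<Longrightarrow> ((\<lambda>t. fst (x t)) has_vector_derivative fst v) F"
  unfolding has_vector_derivative_def using has_derivative_fst by fastforce

lemma vd_snd: "(x has_vector_derivative v) F \<Longrightarrow> ((\<lambda>t. snd (x t)) has_vector_derivative snd v) F"
  unfolding has_vector_derivative_def using has_derivative_snd by fastforce

lemma solU_ham:
  assumes "solU (M \<times> UNIV) FF (q0, p0) x"
  shows "ham_sol M K q0 p0 (\<lambda>t. fst (x t)) (\<lambda>t. snd (x t))"
  unfolding ham_sol_def
proof (intro conjI ballI)
  show "fst (x 0) = q0" "snd (x 0) = p0" using assms unfolding solU_def by auto
  fix t :: real assume t: "t \<in> {0..1}"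
  have h: "x t \<in> M \<times> UNIV" "(x has_vector_derivative FF (x t)) (at t within {0..1})"
    using assms t unfolding solU_def by auto
  have xt: "x t = (fst (x t), snd (x t))" by simp
  have e: "FF (x t) = (K (fst (x t)) *v snd (x t), - (1/2) *\<^sub>R grad (\<lambda>y. snd (x t) \<bullet> (K y *v snd (x t))) (fst (x t)))"
    using FF_eq[of "fst (x t)" "snd (x t)"] h(1) by (simp add: mem_Times_iff)
  show "fst (x t) \<in> M" using h(1) by (simp add: mem_Times_iff)
  show "((\<lambda>t. fst (x t)) has_vector_derivative K (fst (x t)) *v snd (x t)) (at t within {0..1})"
    using vd_fst[OF h(2)] e by simp
  show "((\<lambda>t. snd (x t)) has_vector_derivative - (1/2) *\<^sub>R grad (\<lambda>y. snd (x t) \<bullet> (K y *v snd (x t))) (fst (x t))) (at t within {0..1})"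
    using vd_snd[OF h(2)] e by simp
qed

end


lemma vd_inner_at:
  fixes f g :: "real \<Rightarrow> 'a::real_inner"
  assumes "(f has_vector_derivative f') (at t within S)" "(g has_vector_derivative g') (at t within S)"
  shows "((\<lambda>t. f t \<bullet> g t) has_real_derivative (f' \<bullet> g t + f t \<bullet> g')) (at t within S)"
proof -
  have "((\<lambda>t. f t \<bullet> g t) has_derivative (\<lambda>h. f t \<bullet> (h *\<^sub>R g') + (h *\<^sub>R f') \<bullet> g t)) (at t within S)"
    using has_derivative_inner[OF assms[unfolded has_vector_derivative_def]] .
  then show ?thesis unfolding has_field_derivative_def
    by (rule has_derivative_eq_rhs) (simp add: fun_eq_iff algebra_simps inner_commute)
qed

context Kset begin

lemma adjoint:
  assumes q: "q \<in> M"
  shows "(Gq q p zz - (1/2) *\<^sub>R Hq q p aa, K q *v zz - blinfun_apply (K1 q) aa *v p) \<bullet> (dq, dp)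
        = (zz, aa) \<bullet> DFF (q, p) (dq, dp)"
proof -
  have e1: "Gq q p zz \<bullet> dq = p \<bullet> (blinfun_apply (K1 q) dq *v zz)" using Gq_inner[OF q] .
  have e2: "Hq q p aa \<bullet> dq = p \<bullet> (blinfun_apply (blinfun_apply (K2 q) aa) dq *v p)" using Hq_inner[OF q] .
  have e3: "aa \<bullet> Hq q p dq = p \<bullet> (blinfun_apply (blinfun_apply (K2 q) dq) aa *v p)"
    using Hq_inner[OF q] by (simp add: inner_commute)
  have e4: "blinfun_apply (blinfun_apply (K2 q) aa) dq = blinfun_apply (blinfun_apply (K2 q) dq) aa"
    using K2_sym[OF q] .
  have e5: "aa \<bullet> Gq q dp p = dp \<bullet> (blinfun_apply (K1 q) aa *v p)"
    using Gq_inner[OF q] by (simp add: inner_commute)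
  have e6: "aa \<bullet> Gq q p dp = p \<bullet> (blinfun_apply (K1 q) aa *v dp)"
    using Gq_inner[OF q] by (simp add: inner_commute)
  have s1: "p \<bullet> (blinfun_apply (K1 q) dq *v zz) = zz \<bullet> (blinfun_apply (K1 q) dq *v p)"
    by (rule sym_inner[OF K1_sym[OF q]])
  have s2: "p \<bullet> (blinfun_apply (K1 q) aa *v dp) = dp \<bullet> (blinfun_apply (K1 q) aa *v p)"
    by (rule sym_inner[OF K1_sym[OF q]])
  have s3: "zz \<bullet> (K q *v dp) = dp \<bullet> (K q *v zz)"
    by (rule sym_inner[OF K_sym[OF q]])
  show ?thesis
    unfolding DFF_def
    using e1 e2 e3 e4 e5 e6 s1 s2 s3
    by (simp add: inner_add_right inner_diff_left inner_add_left inner_commute[of "K q *v zz"]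
        inner_commute[of "blinfun_apply (K1 q) aa *v p" dp] algebra_simps)
qed

end

context c1f begin

lemma remainder:
  assumes xs: "solU U F x0 xs" and eps: "\<epsilon> > 0"
  obtains \<eta> where "\<eta> > 0"
    "\<And>t y. t \<in> {0..1} \<Longrightarrow> norm (y - xs t) < \<eta> \<Longrightarrow>
        norm (F y - F (xs t) - DF (xs t) (y - xs t)) \<le> \<epsilon> * norm (y - xs t)"
proof -
  have xc: "continuous_on {0..1} xs" using solU_cont[OF xs] .
  have X: "compact (xs ` {0..1})" "xs ` {0..1} \<subseteq> U"
    using compact_continuous_image[OF xc] xs unfolding solU_def by auto
  obtain e W where e: "e > 0" "compact W" "W \<subseteq> U" "\<And>x. x \<in> xs ` {0..1} \<Longrightarrow> cball x e \<subseteq> W"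
    by (rule thicken[OF X(1) U_open X(2)]) blast
  have "uniformly_continuous_on (W \<times> cball 0 1) (\<lambda>z. DF (fst z) (snd z))"
    by (rule compact_uniformly_continuous[OF continuous_on_subset[OF DF_cont]])
       (use e in \<open>auto intro: compact_Times\<close>)
  then obtain \<eta>0 where \<eta>0: "\<eta>0 > 0"
    "\<And>w w'. w \<in> W \<times> cball 0 1 \<Longrightarrow> w' \<in> W \<times> cball 0 1 \<Longrightarrow> dist w' w < \<eta>0 \<Longrightarrow>
        dist (DF (fst w') (snd w')) (DF (fst w) (snd w)) < \<epsilon>"
    unfolding uniformly_continuous_on_def using eps by metis
  define \<eta> where "\<eta> = min \<eta>0 e"
  have "norm (F y - F (xs t) - DF (xs t) (y - xs t)) \<le> \<epsilon> * norm (y - xs t)"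
    if t: "t \<in> {0..1}" and y: "norm (y - xs t) < \<eta>" for t y
  proof -
    let ?x = "xs t"
    have xW: "?x \<in> W" using e(4)[of ?x] t e(1) by auto
    have ballW: "ball ?x \<eta> \<subseteq> W" using e(4)[of ?x] t unfolding \<eta>_def by auto
    have "norm (F y - F ?x - DF ?x (y - ?x)) \<le> norm (y - ?x) * \<epsilon>"
    proof (rule differentiable_bound_linearization[where S="ball ?x \<eta>" and f'=DF])
      fix \<tau> :: real assume "\<tau> \<in> {0..1}"
      then have "norm (\<tau> *\<^sub>R (y - ?x)) \<le> norm (y - ?x)" by (auto simp: mult_left_le_one_le)
      then show "?x + \<tau> *\<^sub>R (y - ?x) \<in> ball ?x \<eta>" using y by (simp add: dist_norm)
    next
      fix u assume u: "u \<in> ball ?x \<eta>"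
      then have uW: "u \<in> W" using ballW by blast
      show "(F has_derivative DF u) (at u within ball ?x \<eta>)"
        using F_der uW e(3) has_derivative_at_withinI by blast
      show "onorm (DF u - DF ?x) \<le> \<epsilon>"
      proof (rule onorm_le)
        fix h
        show "norm ((DF u - DF ?x) h) \<le> \<epsilon> * norm h"
        proof (cases "h = 0")
          case True
          have "DF u 0 = 0" "DF ?x 0 = 0" using DF_linear[of u] DF_linear[of ?x] uW xW e(3) linear_0 by auto
          then show ?thesis using True by (simp add: fun_diff_def)
        next
          case False
          define h' where "h' = h /\<^sub>R norm h"
          have h'c: "h' \<in> cball 0 1" unfolding h'_def using False by simp
          have "dist (u, h') (?x, h') < \<eta>0" using u unfolding \<eta>_def by (simp add: dist_Pair_Pair dist_commute)
          then have "dist (DF u h') (DF ?x h') < \<epsilon>"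
            using \<eta>0(2)[of "(?x, h')" "(u, h')"] uW xW h'c by auto
          then have n: "norm (DF u h' - DF ?x h') \<le> \<epsilon>" by (simp add: dist_norm)
          have "DF u h - DF ?x h = DF u (norm h *\<^sub>R h') - DF ?x (norm h *\<^sub>R h')" using False by (simp add: h'_def)
          also have "\<dots> = norm h *\<^sub>R (DF u h' - DF ?x h')"
          proof -
            have "u \<in> U" "?x \<in> U" using uW xW e(3) by auto
            then show ?thesis
              using linear_cmul[OF DF_linear[of u]] linear_cmul[OF DF_linear[of ?x]] by (simp add: scaleR_diff_right)
          qed
          finally have "norm (DF u h - DF ?x h) = norm h * norm (DF u h' - DF ?x h')" by simp
          also have "\<dots> \<le> norm h * \<epsilon>" using n by (simp add: mult_left_mono)
          finally show ?thesis by (simp add: fun_diff_def mult.commute)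
        qed
      qed
    next
      show "?x \<in> ball ?x \<eta>" using \<eta>0 e unfolding \<eta>_def by simp
    qed
    then show ?thesis by (simp add: mult.commute)
  qed
  moreover have "\<eta> > 0" unfolding \<eta>_def using \<eta>0 e by simp
  ultimately show ?thesis using that by blast
qed

end


theorem proposition9:
  fixes M :: "(real^'n) set"
    and K :: "real^'n \<Rightarrow> real^'n^'n"
    and g :: "real^'n \<Rightarrow> real"
    and q0 p0 :: "real^'n"
    and q p z \<alpha> :: "real \<Rightarrow> real^'n"
  assumes M_open: "open M"
    and q0M: "q0 \<in> M"
    and K_sym: "\<forall>x\<in>M. transpose (K x) = K x"
    and K_psd: "\<forall>x\<in>M. \<forall>v. 0 \<le> v \<bullet> (K x *v v)"
    and K_C2: "C2_on M K"
    and g_C1: "C1_on M g"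
    and geod: "ham_sol M K q0 p0 q p"
    and z0: "z 0 = grad g (q 1)"
    and alpha0: "\<alpha> 0 = 0"
    and z_ode: "\<forall>t\<in>{0..1}. (z has_vector_derivative
          (grad (\<lambda>x. p (1 - t) \<bullet> (K x *v z t)) (q (1 - t))
           - (1/2) *\<^sub>R frechet_derivative (\<lambda>y. grad (\<lambda>x. p (1 - t) \<bullet> (K x *v p (1 - t))) y)
                          (at (q (1 - t))) (\<alpha> t))) (at t within {0..1})"
    and alpha_ode: "\<forall>t\<in>{0..1}. (\<alpha> has_vector_derivative
          (K (q (1 - t)) *v z t
           - frechet_derivative (\<lambda>y. K y *v p (1 - t)) (at (q (1 - t))) (\<alpha> t))) (at t within {0..1})"
  shows "(J1 M K g q0 has_derivative (\<lambda>v. (K q0 *v p0 + \<alpha> 1) \<bullet> v)) (at p0)"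
proof -
  obtain K1 where K1: "\<forall>x\<in>M. (K has_derivative blinfun_apply (K1 x)) (at x)" and K1C: "C1_on M K1"
    using K_C2 unfolding C2_on_def by blast
  obtain K2 where K2: "\<forall>x\<in>M. (K1 has_derivative blinfun_apply (K2 x)) (at x)" and K2c: "continuous_on M K2"
    using K1C unfolding C1_on_def by blast
  obtain g' where g': "\<forall>x\<in>M. (g has_derivative blinfun_apply (g' x)) (at x)"
    using g_C1 unfolding C1_on_def by blast
  interpret Kset M K K1 K2
    by unfold_locales (use M_open K_sym K1 K2 K2c in auto)
  interpret c: c1f "M \<times> UNIV" FF DFF by (rule c1f_FF)
  define xs where "xs = (\<lambda>t. (q t, p t))"
  have xs: "solU (M \<times> UNIV) FF (q0, p0) xs" unfolding xs_def by (rule ham_solU[OF geod])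
  obtain \<delta> C where \<delta>: "\<delta> > 0" "C \<ge> 0"
    "\<And>y0. norm (y0 - (q0, p0)) < \<delta> \<Longrightarrow> \<exists>y. solU (M \<times> UNIV) FF y0 y \<and>
        (\<forall>t\<in>{0..1}. norm (y t - xs t) \<le> C * norm (y0 - (q0, p0)))"
    using c.existence[OF xs] by blast
  have qM: "q t \<in> M" if "t \<in> {0..1}" for t using geod that unfolding ham_sol_def by auto
  have q1M: "q 1 \<in> M" using qM by simp
  define Dg where "Dg = blinfun_apply (g' (q 1))"
  have gder: "(g has_derivative Dg) (at (q 1))" using g' q1M unfolding Dg_def by blast
  have gradg: "grad g (q 1) \<bullet> v = Dg v" for v using grad_inner[OF gder] .
  have J1eq: "J1 M K g q0 p' = (1/2) * (p' \<bullet> (K q0 *v p')) + g (fst (y 1))"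
    if y: "solU (M \<times> UNIV) FF (q0, p') y" for p' y
  proof -
    have "(THE yy. \<exists>qq pp. ham_sol M K q0 p' qq pp \<and> yy = qq 1) = fst (y 1)"
    proof (rule the_equality)
      show "\<exists>qq pp. ham_sol M K q0 p' qq pp \<and> fst (y 1) = qq 1"
        using solU_ham[OF y] by blast
      fix yy assume "\<exists>qq pp. ham_sol M K q0 p' qq pp \<and> yy = qq 1"
      then obtain qq pp where h: "ham_sol M K q0 p' qq pp" "yy = qq 1" by blast
      have "(\<lambda>t. (qq t, pp t)) 1 = y 1" by (rule c.sol_unique[OF ham_solU[OF h(1)] y]) simp
      then show "yy = fst (y 1)" using h by (metis fst_conv)
    qed
    then show ?thesis unfolding J1_def by simp
  qed
  have J1p0: "J1 M K g q0 p0 = (1/2) * (p0 \<bullet> (K q0 *v p0)) + g (q 1)"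
    using J1eq[OF xs] unfolding xs_def by simp
  define lam where "lam = (\<lambda>t. (z (1 - t), \<alpha> (1 - t)))"
  define Zf where "Zf t = (Gq (q t) (p t) (z (1 - t)) - (1/2) *\<^sub>R Hq (q t) (p t) (\<alpha> (1 - t)),
       K (q t) *v z (1 - t) - blinfun_apply (K1 (q t)) (\<alpha> (1 - t)) *v p t)" for t
  have im: "(\<lambda>t. 1 - t) ` {0..1} = {0::real..1}"
  proof
    show "(\<lambda>t. 1 - t) ` {0..1} \<subseteq> {0::real..1}" by auto
    show "{0::real..1} \<subseteq> (\<lambda>t. 1 - t) ` {0..1}"
    proof
      fix x :: real assume "x \<in> {0..1}"
      then show "x \<in> (\<lambda>t. 1 - t) ` {0..1}" by (intro image_eqI[of _ _ "1 - x"]) auto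
    qed
  qed
  have lamd: "(lam has_vector_derivative - Zf t) (at t within {0..1})" if t: "t \<in> {0..1}" for t
  proof -
    have s: "1 - t \<in> {0..1}" using t by auto
    have qtM: "q t \<in> M" using qM[OF t] .
    have zd: "(z has_vector_derivative fst (Zf t)) (at (1 - t) within {0..1})"
      using z_ode[rule_format, OF s] qtM by (simp add: Zf_def grad_K fd_grad)
    have ad: "(\<alpha> has_vector_derivative snd (Zf t)) (at (1 - t) within {0..1})"
      using alpha_ode[rule_format, OF s] qtM by (simp add: Zf_def fd_Kp)
    have pd: "((\<lambda>s. (z s, \<alpha> s)) has_vector_derivative Zf t) (at (1 - t) within (\<lambda>t. 1 - t) ` {0..1})"
      using has_vector_derivative_Pair[OF zd ad] im by simp
    have ld: "((\<lambda>t. 1 - t) has_vector_derivative -1) (at t within {0..1})"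
      by (auto intro!: derivative_eq_intros)
    from vector_diff_chain_within[OF ld pd]
    show ?thesis unfolding lam_def o_def by simp
  qed
  have lamc: "continuous_on {0..1} lam" by (rule continuous_on_vector_derivative) (use lamd in auto)
  have "compact (lam ` {0..1})" by (rule compact_continuous_image[OF lamc compact_Icc])
  then obtain \<Lambda>0 where \<Lambda>0: "\<And>t. t \<in> {0..1} \<Longrightarrow> norm (lam t) \<le> \<Lambda>0"
    using compact_imp_bounded bounded_iff by (metis image_eqI)
  define \<Lambda> where "\<Lambda> = max \<Lambda>0 0"
  have \<Lambda>: "\<Lambda> \<ge> 0" "\<And>t. t \<in> {0..1} \<Longrightarrow> norm (lam t) \<le> \<Lambda>" using \<Lambda>0 unfolding \<Lambda>_def by force+
  obtain BK where BK: "BK \<ge> 0" "\<And>v. norm (K q0 *v v) \<le> norm v * BK"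
    using bounded_linear.nonneg_bounded[OF matrix_vector_mul_bounded_linear[of "K q0"]] by blast
  show ?thesis
    unfolding has_derivative_at_alt
  proof (intro conjI allI impI)
    show "bounded_linear (\<lambda>v. (K q0 *v p0 + \<alpha> 1) \<bullet> v)" by (rule bounded_linear_inner_right)
    fix e :: real assume e: "e > 0"
    define \<epsilon>1 where "\<epsilon>1 = e / (3 * (\<Lambda> + 1) * (C + 1))"
    have \<epsilon>1: "\<epsilon>1 > 0" unfolding \<epsilon>1_def using e \<Lambda> \<delta> by simp
    obtain \<eta> where \<eta>: "\<eta> > 0" "\<And>t y. t \<in> {0..1} \<Longrightarrow> norm (y - xs t) < \<eta> \<Longrightarrow>
        norm (FF y - FF (xs t) - DFF (xs t) (y - xs t)) \<le> \<epsilon>1 * norm (y - xs t)"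
      using c.remainder[OF xs \<epsilon>1] by blast
    define \<epsilon>2 where "\<epsilon>2 = e / (3 * (C + 1))"
    have \<epsilon>2: "\<epsilon>2 > 0" unfolding \<epsilon>2_def using e \<delta> by simp
    obtain d2 where d2: "d2 > 0" "\<And>y. norm (y - q 1) < d2 \<Longrightarrow> norm (g y - g (q 1) - Dg (y - q 1)) \<le> \<epsilon>2 * norm (y - q 1)"
      using gder[unfolded has_derivative_at_alt] \<epsilon>2 by blast
    define d where "d = min \<delta> (min (\<eta> / (C + 1)) (min (d2 / (C + 1)) (e / (2 * (BK + 1)))))"
    show "\<exists>d>0. \<forall>y. norm (y - p0) < d \<longrightarrow>
        norm (J1 M K g q0 y - J1 M K g q0 p0 - (K q0 *v p0 + \<alpha> 1) \<bullet> (y - p0)) \<le> e * norm (y - p0)"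
    proof (intro exI[of _ d] conjI allI impI)
      show "d > 0" unfolding d_def using \<delta> \<eta> d2 e BK by simp
      fix p' assume p': "norm (p' - p0) < d"
      define v where "v = p' - p0"
      define dd where "dd = norm v"
      have dd0: "dd \<ge> 0" unfolding dd_def by simp
      have "norm ((q0, p') - (q0, p0)) = dd" unfolding dd_def v_def by simp
      then have "norm ((q0, p') - (q0, p0)) < \<delta>" using p' unfolding d_def dd_def v_def by simp
      then obtain y where y: "solU (M \<times> UNIV) FF (q0, p') y"
        "\<And>t. t \<in> {0..1} \<Longrightarrow> norm (y t - xs t) \<le> C * dd"
        using \<delta>(3) \<open>norm ((q0, p') - (q0, p0)) = dd\<close> by metis
      have Cdd: "C * dd \<le> (C + 1) * dd" using dd0 by (simp add: mult_right_mono)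
      have ddl: "dd < \<eta> / (C + 1)" "dd < d2 / (C + 1)" "dd < e / (2 * (BK + 1))"
        using p' unfolding d_def dd_def v_def by auto
      have Cdd_eta: "C * dd < \<eta>" using Cdd ddl(1) \<delta>(2) by (simp add: field_simps)
      have Cdd_d2: "C * dd < d2" using Cdd ddl(2) \<delta>(2) by (simp add: field_simps)
      define \<phi> where "\<phi> t = lam t \<bullet> (y t - xs t)" for t
      define R where "R t = FF (y t) - FF (xs t) - DFF (xs t) (y t - xs t)" for t
      have \<phi>d: "(\<phi> has_real_derivative (lam t \<bullet> R t)) (at t within {0..1})" if t: "t \<in> {0..1}" for t
      proof -
        have yd: "(y has_vector_derivative FF (y t)) (at t within {0..1})" using y(1) t unfolding solU_def by auto
        have xd: "(xs has_vector_derivative FF (xs t)) (at t within {0..1})" using xs t unfolding solU_def by auto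
        have dd': "((\<lambda>t. y t - xs t) has_vector_derivative FF (y t) - FF (xs t)) (at t within {0..1})"
          by (rule has_vector_derivative_diff[OF yd xd])
        have D: "(\<phi> has_real_derivative (- Zf t \<bullet> (y t - xs t) + lam t \<bullet> (FF (y t) - FF (xs t)))) (at t within {0..1})"
          unfolding \<phi>_def by (rule vd_inner_at[OF lamd[OF t] dd'])
        have adj: "Zf t \<bullet> (y t - xs t) = lam t \<bullet> DFF (xs t) (y t - xs t)"
        proof -
          have e: "y t - xs t = (fst (y t) - q t, snd (y t) - p t)" by (simp add: xs_def prod_eq_iff)
          show ?thesis unfolding e
            using adjoint[OF qM[OF t], of "p t" "z (1 - t)" "\<alpha> (1 - t)" "fst (y t) - q t" "snd (y t) - p t"]
            unfolding Zf_def lam_def xs_def by simp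
        qed
        have "- Zf t \<bullet> (y t - xs t) + lam t \<bullet> (FF (y t) - FF (xs t)) = lam t \<bullet> R t"
          unfolding R_def using adj by (simp add: inner_diff_right)
        then show ?thesis using D by simp
      qed
      have \<phi>b: "\<bar>lam t \<bullet> R t\<bar> \<le> \<Lambda> * \<epsilon>1 * (C * dd)" if t: "t \<in> {0..1}" for t
      proof -
        have n: "norm (y t - xs t) \<le> C * dd" using y(2)[OF t] .
        have "norm (y t - xs t) < \<eta>" using n Cdd_eta by simp
        then have Rb: "norm (R t) \<le> \<epsilon>1 * norm (y t - xs t)" unfolding R_def using \<eta>(2)[OF t] by blast
        have "\<bar>lam t \<bullet> R t\<bar> \<le> norm (lam t) * norm (R t)" by (rule Cauchy_Schwarz_ineq2)
        also have "\<dots> \<le> \<Lambda> * (\<epsilon>1 * (C * dd))"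
        proof (rule mult_mono)
          show "norm (lam t) \<le> \<Lambda>" using \<Lambda>(2)[OF t] .
          show "norm (R t) \<le> \<epsilon>1 * (C * dd)" using Rb n \<epsilon>1 by (meson order_trans mult_left_mono less_imp_le)
        qed (use \<Lambda> in auto)
        finally show ?thesis by (simp add: mult.assoc)
      qed
      have T3: "\<bar>\<phi> 1 - \<phi> 0\<bar> \<le> \<Lambda> * \<epsilon>1 * (C * dd) * (1 - 0)"
        by (rule real_deriv_abs_le[where f'="\<lambda>t. lam t \<bullet> R t"]) (use \<phi>d \<phi>b in auto)
      have y0: "y 0 = (q0, p')" using y(1) unfolding solU_def by simp
      have p00: "q 0 = q0" "p 0 = p0" using geod unfolding ham_sol_def by auto
      have phi0: "\<phi> 0 = \<alpha> 1 \<bullet> v" unfolding \<phi>_def lam_def xs_def v_def using y0 p00 by simp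
      have e1: "y 1 - xs 1 = (fst (y 1) - q 1, snd (y 1) - p 1)" by (simp add: xs_def prod_eq_iff)
      have phi1: "\<phi> 1 = Dg (fst (y 1) - q 1)" unfolding \<phi>_def e1 unfolding lam_def using z0 alpha0 gradg by simp
      have fy: "norm (fst (y 1) - q 1) \<le> C * dd"
      proof -
        have "norm (fst (y 1) - q 1) = norm (fst (y 1 - xs 1))" unfolding xs_def by simp
        also have "\<dots> \<le> norm (y 1 - xs 1)" by (metis norm_fst_le prod.collapse)
        also have "\<dots> \<le> C * dd" using y(2)[of 1] by simp
        finally show ?thesis .
      qed
      have T2: "\<bar>g (fst (y 1)) - g (q 1) - Dg (fst (y 1) - q 1)\<bar> \<le> \<epsilon>2 * (C * dd)"
      proof -
        have "norm (fst (y 1) - q 1) < d2" using fy Cdd_d2 by simp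
        then have "norm (g (fst (y 1)) - g (q 1) - Dg (fst (y 1) - q 1)) \<le> \<epsilon>2 * norm (fst (y 1) - q 1)"
          using d2(2) by blast
        also have "\<dots> \<le> \<epsilon>2 * (C * dd)" using fy \<epsilon>2 by (simp add: mult_left_mono)
        finally show ?thesis by simp
      qed
      have T1: "(1/2) * (p' \<bullet> (K q0 *v p')) - (1/2) * (p0 \<bullet> (K q0 *v p0)) - (K q0 *v p0) \<bullet> v
            = (1/2) * (v \<bullet> (K q0 *v v))"
      proof -
        have p'v: "p' = p0 + v" unfolding v_def by simp
        have s: "p0 \<bullet> (K q0 *v v) = v \<bullet> (K q0 *v p0)" by (rule sym_inner[OF K_sym[rule_format, OF q0M]])
        show ?thesis unfolding p'v using s
          by (simp add: matrix_vector_right_distrib inner_add_left inner_add_right inner_commute[of "K q0 *v p0" v] algebra_simps)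
      qed
      have T1b: "\<bar>(1/2) * (v \<bullet> (K q0 *v v))\<bar> \<le> (1/2) * (BK * dd) * dd"
      proof -
        have "\<bar>v \<bullet> (K q0 *v v)\<bar> \<le> norm v * norm (K q0 *v v)" by (rule Cauchy_Schwarz_ineq2)
        also have "\<dots> \<le> dd * (dd * BK)" unfolding dd_def by (rule mult_left_mono[OF BK(2)]) simp
        finally show ?thesis by (simp add: mult.commute mult.left_commute)
      qed
      have A1: "(1/2) * (BK * dd) * dd \<le> e / 3 * dd"
      proof -
        have "BK * dd \<le> (BK + 1) * dd" using dd0 by (simp add: mult_right_mono)
        also have "\<dots> \<le> e / 2" using ddl(3) BK(1) by (simp add: field_simps)
        finally have "(1/2) * (BK * dd) \<le> e / 3" using e by simp
        then show ?thesis using dd0 by (rule mult_right_mono)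
      qed
      have A2: "\<epsilon>2 * (C * dd) \<le> e / 3 * dd"
      proof -
        have "\<epsilon>2 * C \<le> e / 3" unfolding \<epsilon>2_def using e \<delta>(2) by (simp add: field_simps)
        then show ?thesis using dd0 by (metis mult.assoc mult_right_mono)
      qed
      have A3: "\<Lambda> * \<epsilon>1 * (C * dd) * (1 - 0) \<le> e / 3 * dd"
      proof -
        have "\<Lambda> * \<epsilon>1 * C = (e / 3) * (\<Lambda> / (\<Lambda> + 1)) * (C / (C + 1))"
          unfolding \<epsilon>1_def using \<Lambda>(1) \<delta>(2) by (simp add: field_simps)
        also have "\<dots> \<le> (e / 3) * 1 * 1"
          using e \<Lambda>(1) \<delta>(2) by (intro mult_mono) auto
        finally have "\<Lambda> * \<epsilon>1 * C \<le> e / 3" by simp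
        then have "\<Lambda> * \<epsilon>1 * C * dd \<le> e / 3 * dd" using dd0 by (rule mult_right_mono)
        then show ?thesis by (simp add: mult.assoc)
      qed
      have decomp: "J1 M K g q0 p' - J1 M K g q0 p0 - (K q0 *v p0 + \<alpha> 1) \<bullet> v
          = (1/2) * (v \<bullet> (K q0 *v v)) + (g (fst (y 1)) - g (q 1) - Dg (fst (y 1) - q 1)) + (\<phi> 1 - \<phi> 0)"
        unfolding J1eq[OF y(1)] J1p0 phi0 phi1 using T1 by (simp add: inner_add_left algebra_simps)
      have "norm (J1 M K g q0 p' - J1 M K g q0 p0 - (K q0 *v p0 + \<alpha> 1) \<bullet> v)
          \<le> \<bar>(1/2) * (v \<bullet> (K q0 *v v))\<bar> + \<bar>g (fst (y 1)) - g (q 1) - Dg (fst (y 1) - q 1)\<bar> + \<bar>\<phi> 1 - \<phi> 0\<bar>"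
        unfolding decomp real_norm_def by linarith
      also have "\<dots> \<le> e / 3 * dd + e / 3 * dd + e / 3 * dd"
        using T1b A1 T2 A2 T3 A3 by linarith
      also have "\<dots> = e * dd" by simp
      finally show "norm (J1 M K g q0 p' - J1 M K g q0 p0 - (K q0 *v p0 + \<alpha> 1) \<bullet> (p' - p0)) \<le> e * norm (p' - p0)"
        unfolding v_def dd_def by simp
    qed
  qed
qed


end
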